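(* Let $V\in\mathbb{C}^{N\times N}$ be unitary, $c_1,c_2\in\mathbb{R}$, $D=c_1I+c_2V$, and $b\neq0$. Let $q_j$, $l_{jj}$, $l_{j+1,j}$, $u_{j-1,j}$ ($j=1,\dots,k$) be produced by the unitary Arnoldi process (described in the context) without breakdown, with $Q_k,L_k,U_k$ as there. Let $T_k=c_1U_k+c_2L_k$ (a tridiagonal matrix) and set $\beta_j=-c_2l_{j+1,j}$, $\gamma_j=-c_1u_{j,j+1}$. Assume $T_k$ has an LU factorization $T_k=\tilde L_k\tilde U_k$ with $\tilde L_k$ lower triangular with diagonal entries $\tilde l_{jj}\neq0$ and $\tilde U_k$ unit upper triangular. Then $$\tilde l_{11}=c_1+c_2l_{11},\qquad \tilde l_{jj}=c_1+c_2l_{jj}-\frac{\beta_{j-1}\gamma_{j-1}}{\tilde l_{j-1,j-1}}\quad(2\le j\le k).$$ Define $\alpha_1=\|b\|_2/\tilde l_{11}$, $\alpha_j=\beta_{j-1}\alpha_{j-1}/\tilde l_{jj}$, $w_1=q_1$, $w_j=q_j+u_{j-1,j}q_{j-1}+\frac{\gamma_{j-1}}{\tilde l_{j-1,j-1}}w_{j-1}$, $x_0=0$ and $x_j=x_{j-1}+\alpha_jw_j$. Then $w_j=Q_jU_j\tilde U_j^{-1}e_j$, $\alpha_j=\|b\|_2\,e_j^TT_j^{-1}e_1$, and $x_k$ is the unique vector in $\mathrm{span}\{b,Db,\dots,D^{k-1}b\}$ whose residual $r_k=b-Dx_k$ is orthogonal to this Krylov subspace; namely $x_k=Q_kU_kz_k$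 with $T_kz_k=\|b\|_2e_1$. Moreover $r_k=r_{k-1}-\alpha_kDw_k$.
   Context: Unitary Arnoldi process: $q_1=b/\|b\|_2$, $q_0=0$, $v_0=0$, $u_{01}=0$; for $j=1,2,\dots$: $v_j=Vq_j$, $u_{j-1,j}=-(q_{j-1}^*v_j)/(q_{j-1}^*v_{j-1})$ for $j>1$, $l_{jj}=q_j^*v_j+u_{j-1,j}q_j^*v_{j-1}$, $\tilde q_{j+1}=v_j-l_{jj}q_j+u_{j-1,j}v_{j-1}$, $l_{j+1,j}=\|\tilde q_{j+1}\|_2$, $q_{j+1}=\tilde q_{j+1}/l_{j+1,j}$; no breakdown means all $l_{j+1,j}\neq0$ and denominators nonzero. $Q_k=[q_1,\dots,q_k]$; $L_k$ is $k\times k$ lower bidiagonal with diagonal $l_{jj}$ and subdiagonal $l_{j+1,j}$; $U_k$ is $k\times k$ upper bidiagonal with unit diagonal and superdiagonal $u_{j-1,j}$. These satisfy $VQ_kU_k=Q_kL_k+l_{k+1,k}q_{k+1}e_k^T$ with $Q_{k+1}$ orthonormal. $e_j$ is the $j$-th standard unit vector. *)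

theory Defs
  imports Complex_Main "Jordan_Normal_Form.Schur_Decomposition"
    "Jordan_Normal_Form.Gauss_Jordan_Elimination"
begin

definition vnorm :: "complex vec \<Rightarrow> real" where
  "vnorm x = sqrt (\<Sum>i<dim_vec x. (cmod (x $ i))\<^sup>2)"

text \<open>Indices of q, v, u, l are 1-based as in the paper.
  Note u \<bullet>c w = sum of u_i * conj(w_i), so q^* v is written v \<bullet>c q.\<close>
definition unitary_arnoldi ::
  "complex mat \<Rightarrow> complex vec \<Rightarrow> nat \<Rightarrow> (nat \<Rightarrow> complex vec) \<Rightarrow> (nat \<Rightarrow> complex vec)
    \<Rightarrow> (nat \<Rightarrow> nat \<Rightarrow> complex) \<Rightarrow> (nat \<Rightarrow> nat \<Rightarrow> complex) \<Rightarrow> bool" where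
  "unitary_arnoldi V b k q v u l \<longleftrightarrow>
     q 0 = 0\<^sub>v (dim_row V) \<and> v 0 = 0\<^sub>v (dim_row V) \<and> u 0 1 = 0 \<and>
     q 1 = (1 / complex_of_real (vnorm b)) \<cdot>\<^sub>v b \<and>
     (\<forall>j\<in>{1..k}.
        v j = V *\<^sub>v q j \<and>
        (1 < j \<longrightarrow> v (j-1) \<bullet>c q (j-1) \<noteq> 0 \<and>
                   u (j-1) j = - (v j \<bullet>c q (j-1)) / (v (j-1) \<bullet>c q (j-1))) \<and>
        l j j = (v j \<bullet>c q j) + u (j-1) j * (v (j-1) \<bullet>c q j) \<and>
        (let qt = v j - l j j \<cdot>\<^sub>v q j + u (j-1) j \<cdot>\<^sub>v v (j-1) in
           vnorm qt \<noteq> 0 \<and> l (j+1) j = complex_of_real (vnorm qt) \<and>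
           q (j+1) = (1 / l (j+1) j) \<cdot>\<^sub>v qt))"

definition Qmat :: "(nat \<Rightarrow> complex vec) \<Rightarrow> nat \<Rightarrow> nat \<Rightarrow> complex mat" where
  "Qmat q N j = mat N j (\<lambda>(r,c). q (c+1) $ r)"

definition Lmat :: "(nat \<Rightarrow> nat \<Rightarrow> complex) \<Rightarrow> nat \<Rightarrow> complex mat" where
  "Lmat l j = mat j j (\<lambda>(r,c). if r = c then l (r+1) (r+1)
                               else if r = c + 1 then l (r+1) (c+1) else 0)"

definition Umat :: "(nat \<Rightarrow> nat \<Rightarrow> complex) \<Rightarrow> nat \<Rightarrow> complex mat" where
  "Umat u j = mat j j (\<lambda>(r,c). if r = c then 1
                               else if c = r + 1 then u (r+1) (c+1) else 0)"

definition Tmat :: "real \<Rightarrow> real \<Rightarrow> (nat \<Rightarrow> nat \<Rightarrow> complex) \<Rightarrow> (nat \<Rightarrow> nat \<Rightarrow> complex)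
    \<Rightarrow> nat \<Rightarrow> complex mat" where
  "Tmat c1 c2 u l j = complex_of_real c1 \<cdot>\<^sub>m Umat u j + complex_of_real c2 \<cdot>\<^sub>m Lmat l j"

definition lead_sub :: "complex mat \<Rightarrow> nat \<Rightarrow> complex mat" where
  "lead_sub A j = mat j j (\<lambda>(r,c). A $$ (r,c))"

definition minv :: "complex mat \<Rightarrow> complex mat" where
  "minv A = the (mat_inverse A)"

text \<open>Krylov subspace span{b, Db, ..., D^(k-1) b}: all linear combinations,
  i.e. the range of the Krylov matrix [b, Db, ..., D^(k-1) b].\<close>
definition krylov :: "complex mat \<Rightarrow> complex vec \<Rightarrow> nat \<Rightarrow> complex vec set" where
  "krylov D b k = {mat (dim_vec b) k (\<lambda>(r,c). ((D ^\<^sub>m c) *\<^sub>v b) $ r) *\<^sub>v a | a. a \<in> carrier_vec k}"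

end

theory Submission
  imports Defs
begin


lemma adj_idx: fixes A :: "complex mat" shows "i < dim_col A \<Longrightarrow> j < dim_row A \<Longrightarrow> mat_adjoint A $$ (i,j) = cnj (A $$ (j,i))"
  unfolding mat_adjoint_def by (simp add: mat_of_rows_def)
lemma adj_dim[simp]: "dim_row (mat_adjoint A) = dim_col A" "dim_col (mat_adjoint A) = dim_row A"
  by (simp_all add: mat_adjoint_def)
lemma adj_carrier: "A \<in> carrier_mat n m \<Longrightarrow> mat_adjoint A \<in> carrier_mat m n"
  by auto

lemma cip: fixes v w :: "complex vec" shows "w \<in> carrier_vec n \<Longrightarrow> v \<bullet>c w = (\<Sum>i<n. v$i * cnj (w$i))"
  by (auto simp: scalar_prod_def lessThan_atLeast0)

lemma ip_addl: fixes x y z :: "complex vec" assumes "x \<in> carrier_vec n" "y \<in> carrier_vec n" "z \<in> carrier_vec n"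
  shows "(x + y) \<bullet>c z = x \<bullet>c z + y \<bullet>c z"
proof -
  have "(x + y) \<bullet>c z = (\<Sum>i<n. x$i * cnj (z$i) + y$i * cnj (z$i))"
    unfolding cip[OF assms(3)] using assms by (intro sum.cong) (auto simp: algebra_simps)
  thus ?thesis unfolding cip[OF assms(3)] by (simp add: sum.distrib)
qed

lemma ip_minusl: fixes x y z :: "complex vec" assumes "x \<in> carrier_vec n" "y \<in> carrier_vec n" "z \<in> carrier_vec n"
  shows "(x - y) \<bullet>c z = x \<bullet>c z - y \<bullet>c z"
proof -
  have "(x - y) \<bullet>c z = (\<Sum>i<n. x$i * cnj (z$i) - y$i * cnj (z$i))"
    unfolding cip[OF assms(3)] using assms by (intro sum.cong) (auto simp: algebra_simps)
  thus ?thesis unfolding cip[OF assms(3)] by (simp add: sum_subtractf)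
qed

lemma ip_addr: fixes x y z :: "complex vec" assumes "x \<in> carrier_vec n" "y \<in> carrier_vec n" "z \<in> carrier_vec n"
  shows "z \<bullet>c (x + y) = z \<bullet>c x + z \<bullet>c y"
proof -
  have "z \<bullet>c (x + y) = (\<Sum>i<n. z$i * cnj (x$i) + z$i * cnj (y$i))"
    unfolding cip[OF add_carrier_vec[OF assms(1,2)]] using assms by (intro sum.cong) (auto simp: algebra_simps)
  thus ?thesis unfolding cip[OF assms(1)] cip[OF assms(2)] by (simp add: sum.distrib)
qed

lemma ip_smultl: fixes x y z :: "complex vec" assumes "z \<in> carrier_vec n" "x \<in> carrier_vec n"
  shows "(c \<cdot>\<^sub>v x) \<bullet>c z = c * (x \<bullet>c z)"
proof -
  have "(c \<cdot>\<^sub>v x) \<bullet>c z = (\<Sum>i<n. c * (x$i * cnj (z$i)))"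
    unfolding cip[OF assms(1)] using assms by (intro sum.cong) auto
  thus ?thesis unfolding cip[OF assms(1)] by (simp add: sum_distrib_left)
qed

lemma ip_smultr: fixes x y z :: "complex vec" assumes "z \<in> carrier_vec n"
  shows "x \<bullet>c (c \<cdot>\<^sub>v z) = cnj c * (x \<bullet>c z)"
proof -
  have "x \<bullet>c (c \<cdot>\<^sub>v z) = (\<Sum>i<n. cnj c * (x$i * cnj (z$i)))"
    using assms by (subst cip[of "c \<cdot>\<^sub>v z" n]) (auto intro!: sum.cong)
  thus ?thesis unfolding cip[OF assms] by (simp add: sum_distrib_left)
qed

lemma ip_conj: fixes x y z :: "complex vec" assumes "x \<in> carrier_vec n" "z \<in> carrier_vec n"
  shows "x \<bullet>c z = cnj (z \<bullet>c x)"
  unfolding cip[OF assms(1)] cip[OF assms(2)] by (simp add: cnj_sum mult.commute)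

lemma ip_zero: fixes x y z :: "complex vec" assumes "z \<in> carrier_vec n" shows "0\<^sub>v n \<bullet>c z = 0" "z \<bullet>c 0\<^sub>v n = 0"
  using assms by (auto simp: cip)

lemma adj_ip: fixes A :: "complex mat" assumes A: "A \<in> carrier_mat n m" and x: "x \<in> carrier_vec m" and y: "y \<in> carrier_vec n"
  shows "(A *\<^sub>v x) \<bullet>c y = x \<bullet>c (mat_adjoint A *\<^sub>v y)"
proof -
  have "(A *\<^sub>v x) \<bullet>c y = (\<Sum>i<n. (\<Sum>a<m. A $$ (i,a) * x $ a) * cnj (y$i))"
    unfolding cip[OF y] using A x
    by (intro sum.cong) (auto simp: scalar_prod_def lessThan_atLeast0 mult.commute)
  also have "\<dots> = (\<Sum>i<n. \<Sum>a<m. x $ a * (A $$ (i,a) * cnj (y$i)))"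
    by (simp add: sum_distrib_right sum_distrib_left mult_ac)
  also have "\<dots> = (\<Sum>a<m. x $ a * (\<Sum>i<n. A $$ (i,a) * cnj (y$i)))"
    by (subst sum.swap) (simp add: sum_distrib_left)
  also have "\<dots> = x \<bullet>c (mat_adjoint A *\<^sub>v y)"
    unfolding cip[OF mult_mat_vec_carrier[OF adj_carrier[OF A] y]] using A y
    by (intro sum.cong) (auto simp: scalar_prod_def lessThan_atLeast0 adj_idx cnj_sum mult.commute)
  finally show ?thesis .
qed

lemma unitary_ip: fixes V :: "complex mat" assumes V: "V \<in> carrier_mat n n" "mat_adjoint V * V = 1\<^sub>m n"
  and x: "x \<in> carrier_vec n" and y: "y \<in> carrier_vec n"
  shows "(V *\<^sub>v x) \<bullet>c (V *\<^sub>v y) = x \<bullet>c y"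
proof -
  have "(V *\<^sub>v x) \<bullet>c (V *\<^sub>v y) = x \<bullet>c (mat_adjoint V *\<^sub>v (V *\<^sub>v y))"
    using adj_ip[OF V(1) x mult_mat_vec_carrier[OF V(1) y]] .
  also have "mat_adjoint V *\<^sub>v (V *\<^sub>v y) = y"
    using V y by (metis adj_carrier assoc_mult_mat_vec one_mult_mat_vec)
  finally show ?thesis .
qed

definition vn2 where "vn2 x = (\<Sum>i<dim_vec x. (cmod (x $ i))\<^sup>2)"

lemma ip_self: fixes x y z :: "complex vec" assumes "x \<in> carrier_vec n" shows "x \<bullet>c x = complex_of_real ((vnorm x)^2)"
proof -
  have "(vnorm x)^2 = (\<Sum>i<n. (cmod (x $ i))\<^sup>2)" unfolding vnorm_def using assms
    by (simp add: sum_nonneg)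
  thus ?thesis unfolding cip[OF assms] by (simp only: of_real_sum complex_norm_square)
qed


definition gmat :: "nat \<Rightarrow> (nat \<Rightarrow> complex vec) \<Rightarrow> nat \<Rightarrow> complex mat" where
  "gmat n f j = mat n j (\<lambda>(r,c). f c $ r)"
definition sp :: "nat \<Rightarrow> (nat \<Rightarrow> complex vec) \<Rightarrow> nat \<Rightarrow> complex vec set" where
  "sp n f j = {gmat n f j *\<^sub>v a | a. a \<in> carrier_vec j}"
definition subsp :: "nat \<Rightarrow> complex vec set \<Rightarrow> bool" where
  "subsp n W \<longleftrightarrow> W \<subseteq> carrier_vec n \<and> 0\<^sub>v n \<in> W \<and> (\<forall>x\<in>W. \<forall>y\<in>W. x + y \<in> W) \<and> (\<forall>x\<in>W. \<forall>c. c \<cdot>\<^sub>v x \<in> W)"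

lemma subspD: assumes "subsp n W"
  shows "W \<subseteq> carrier_vec n" "0\<^sub>v n \<in> W" "\<And>x y. x \<in> W \<Longrightarrow> y \<in> W \<Longrightarrow> x + y \<in> W"
    "\<And>x c. x \<in> W \<Longrightarrow> c \<cdot>\<^sub>v x \<in> W"
  using assms unfolding subsp_def by simp_all

lemma subspI: assumes "W \<subseteq> carrier_vec n" "0\<^sub>v n \<in> W" "\<And>x y. x \<in> W \<Longrightarrow> y \<in> W \<Longrightarrow> x + y \<in> W"
    "\<And>x c. x \<in> W \<Longrightarrow> c \<cdot>\<^sub>v x \<in> W"
  shows "subsp n W"
  using assms unfolding subsp_def by simp

lemma gmat_carrier[simp]: "gmat n f j \<in> carrier_mat n j" unfolding gmat_def by (rule mat_carrier)

lemma gmat_mvc[simp]: "gmat n f j *\<^sub>v a \<in> carrier_vec n" unfolding gmat_def by (rule carrier_vecI) simp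

lemma mv_zero[simp]: "M \<in> carrier_mat n m \<Longrightarrow> M *\<^sub>v 0\<^sub>v m = (0\<^sub>v n :: complex vec)"
  by (auto intro!: eq_vecI simp: scalar_prod_def)

lemma gmat_mv: "a \<in> carrier_vec j \<Longrightarrow> gmat n f j *\<^sub>v a = vec n (\<lambda>r. \<Sum>c<j. f c $ r * a $ c)"
  unfolding gmat_def by (auto simp: scalar_prod_def lessThan_atLeast0 intro!: eq_vecI sum.cong)

lemma gmat_Suc: assumes a: "a \<in> carrier_vec (Suc j)" and f: "f j \<in> carrier_vec n"
  shows "gmat n f (Suc j) *\<^sub>v a = gmat n f j *\<^sub>v vec j (\<lambda>i. a$i) + a$j \<cdot>\<^sub>v f j"
  using a f by (auto simp: gmat_mv intro!: eq_vecI sum.cong)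

lemma sp_sub: assumes W: "subsp n W" and f: "\<forall>c<j. f c \<in> W"
  shows "sp n f j \<subseteq> W"
  using f
proof (induction j)
  case 0
  have "gmat n f 0 *\<^sub>v a = 0\<^sub>v n" if "a \<in> carrier_vec 0" for a
    using that by (auto simp: gmat_mv)
  then show ?case using subspD(2)[OF W] unfolding sp_def by auto
next
  case (Suc j)
  show ?case
  proof
    fix y assume "y \<in> sp n f (Suc j)"
    then obtain a where a: "a \<in> carrier_vec (Suc j)" and y: "y = gmat n f (Suc j) *\<^sub>v a"
      unfolding sp_def by auto
    have fj: "f j \<in> W" using Suc by auto
    hence fjc: "f j \<in> carrier_vec n" using subspD(1)[OF W] by auto
    have IH: "sp n f j \<subseteq> W" using Suc.IH Suc.prems by auto
    have "gmat n f j *\<^sub>v vec j (\<lambda>i. a$i) \<in> sp n f j" unfolding sp_def by auto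
    hence "gmat n f j *\<^sub>v vec j (\<lambda>i. a$i) \<in> W" using IH by auto
    moreover have "a$j \<cdot>\<^sub>v f j \<in> W" using fj subspD(4)[OF W] by auto
    ultimately show "y \<in> W" unfolding y gmat_Suc[where f=f, OF a fjc] by (rule subspD(3)[OF W])
  qed
qed

lemma sp_subsp: assumes f: "\<forall>c<j. f c \<in> carrier_vec n" shows "subsp n (sp n f j)"
proof -
  have 1: "sp n f j \<subseteq> carrier_vec n" unfolding sp_def by auto
  have 2: "0\<^sub>v n \<in> sp n f j" unfolding sp_def
    by (rule CollectI, rule exI[of _ "0\<^sub>v j"]) (auto simp: gmat_mv intro!: eq_vecI)
  have 3: "x + y \<in> sp n f j" if hx: "x \<in> sp n f j" and hy: "y \<in> sp n f j" for x y
  proof -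
    obtain a where ab1: "a \<in> carrier_vec j" "x = gmat n f j *\<^sub>v a"
      using hx unfolding sp_def by auto
    obtain b where ab2: "b \<in> carrier_vec j" "y = gmat n f j *\<^sub>v b"
      using hy unfolding sp_def by auto
    note ab = ab1 ab2
    have "x + y = gmat n f j *\<^sub>v (a + b)"
      using ab mult_add_distrib_mat_vec[OF gmat_carrier ab(1) ab(3)] by simp
    moreover have "a + b \<in> carrier_vec j" using ab by simp
    ultimately show ?thesis unfolding sp_def by blast
  qed
  have 4: "c \<cdot>\<^sub>v x \<in> sp n f j" if hx: "x \<in> sp n f j" for x c
  proof -
    obtain a where ab: "a \<in> carrier_vec j" "x = gmat n f j *\<^sub>v a"
      using hx unfolding sp_def by auto
    have "c \<cdot>\<^sub>v x = gmat n f j *\<^sub>v (c \<cdot>\<^sub>v a)"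
      using ab mult_mat_vec[OF gmat_carrier ab(1)] by simp
    moreover have "c \<cdot>\<^sub>v a \<in> carrier_vec j" using ab by simp
    ultimately show ?thesis unfolding sp_def by blast
  qed
  show ?thesis using 1 2 3 4 by (rule subspI)
qed

lemma sp_gen: assumes "c < j" "f c \<in> carrier_vec n" shows "f c \<in> sp n f j"
proof -
  have "gmat n f j *\<^sub>v unit_vec j c = f c"
  proof (rule eq_vecI)
    fix r assume r: "r < dim_vec (f c)"
    have "(\<Sum>c'<j. f c' $ r * unit_vec j c $ c') = (\<Sum>c'<j. if c' = c then f c $ r else 0)"
      by (intro sum.cong) (auto simp: unit_vec_def)
    also have "\<dots> = f c $ r" using assms by simp
    finally show "(gmat n f j *\<^sub>v unit_vec j c) $ r = f c $ r" using r assms by (simp add: gmat_mv)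
  qed (use assms in \<open>simp add: gmat_mv\<close>)
  thus ?thesis unfolding sp_def by (intro CollectI exI[of _ "unit_vec j c"]) auto
qed

lemma sp_mono: assumes "j \<le> j'" "\<forall>c<j'. f c \<in> carrier_vec n" shows "sp n f j \<subseteq> sp n f j'"
proof -
  have "subsp n (sp n f j')" using assms(2) by (rule sp_subsp)
  moreover have "\<forall>c<j. f c \<in> sp n f j'"
  proof (intro allI impI)
    fix c assume "c < j" thus "f c \<in> sp n f j'" using assms by (intro sp_gen) auto
  qed
  ultimately show ?thesis by (rule sp_sub)
qed

lemma subsp_orth: fixes x :: "complex vec" assumes x: "x \<in> carrier_vec n"
  shows "subsp n {y \<in> carrier_vec n. x \<bullet>c y = 0}"
proof -
  have "x \<bullet>c (y + z) = 0" if "y \<in> carrier_vec n" "z \<in> carrier_vec n" "x \<bullet>c y = 0" "x \<bullet>c z = 0" for y z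
    using ip_addr[OF that(1,2) x] that(3,4) by simp
  moreover have "x \<bullet>c (c \<cdot>\<^sub>v y) = 0" if "y \<in> carrier_vec n" "x \<bullet>c y = 0" for y c
    using ip_smultr[OF that(1), of x c] that(2) by simp
  moreover have "x \<bullet>c 0\<^sub>v n = 0" using ip_zero(2)[OF x] .
  ultimately show ?thesis by (intro subspI) auto
qed

lemma subsp_pre: assumes M: "M \<in> carrier_mat n n" and W: "subsp n W"
  shows "subsp n {y \<in> carrier_vec n. M *\<^sub>v y \<in> W}"
proof -
  have "M *\<^sub>v (y + z) \<in> W" if "y \<in> carrier_vec n" "z \<in> carrier_vec n" "M *\<^sub>v y \<in> W" "M *\<^sub>v z \<in> W" for y z
    using mult_add_distrib_mat_vec[OF M that(1,2)] subspD(3)[OF W that(3,4)] by simp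
  moreover have "M *\<^sub>v (c \<cdot>\<^sub>v y) \<in> W" if "y \<in> carrier_vec n" "M *\<^sub>v y \<in> W" for y c
    using mult_mat_vec[OF M that(1), of c] subspD(4)[OF W that(2)] by simp
  moreover have "M *\<^sub>v 0\<^sub>v n \<in> W" using subspD(2)[OF W] M by simp
  ultimately show ?thesis by (intro subspI) auto
qed

lemma subsp_lin: assumes W: "subsp n W" and x: "x \<in> W" and y: "y \<in> W"
  shows "a \<cdot>\<^sub>v x + b \<cdot>\<^sub>v y \<in> W" "x - y \<in> W" "x + y \<in> W" "a \<cdot>\<^sub>v x \<in> W"
proof -
  note D = subspD[OF W]
  have c: "x \<in> carrier_vec n" "y \<in> carrier_vec n" using x y D(1) by auto
  show "a \<cdot>\<^sub>v x + b \<cdot>\<^sub>v y \<in> W" by (rule D(3)[OF D(4)[OF x] D(4)[OF y]])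
  show "x + y \<in> W" by (rule D(3)[OF x y])
  show "a \<cdot>\<^sub>v x \<in> W" by (rule D(4)[OF x])
  have "x - y = x + (-1) \<cdot>\<^sub>v y" using c by (auto intro!: eq_vecI)
  thus "x - y \<in> W" using D(3)[OF x D(4)[OF y]] by simp
qed




lemma vnorm_pos: fixes b :: "complex vec" assumes "b \<in> carrier_vec n" "b \<noteq> 0\<^sub>v n"
  shows "vnorm b > 0"
proof -
  have "b \<bullet>c b \<noteq> 0" using assms conjugate_square_eq_0_vec[OF assms(1)] by auto
  hence "vnorm b \<noteq> 0" using ip_self[OF assms(1)] by auto
  moreover have "vnorm b \<ge> 0" unfolding vnorm_def by (intro real_sqrt_ge_zero sum_nonneg) auto
  ultimately show ?thesis by simp
qed

locale arn =
  fixes V :: "complex mat" and N k :: nat and b :: "complex vec" and q v :: "nat \<Rightarrow> complex vec"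
    and u l :: "nat \<Rightarrow> nat \<Rightarrow> complex"
  assumes V: "V \<in> carrier_mat N N" "mat_adjoint V * V = 1\<^sub>m N"
    and b: "b \<in> carrier_vec N" "b \<noteq> 0\<^sub>v N"
    and arn: "unitary_arnoldi V b k q v u l"
begin

definition qt :: "nat \<Rightarrow> complex vec" where
  "qt j = v j - l j j \<cdot>\<^sub>v q j + u (j-1) j \<cdot>\<^sub>v v (j-1)"

definition Y :: "nat \<Rightarrow> complex vec" where
  "Y m = q m + u (m-1) m \<cdot>\<^sub>v q (m-1)"

lemma arn0: "q 0 = 0\<^sub>v N" "v 0 = 0\<^sub>v N" "u 0 1 = 0" "q 1 = (1 / complex_of_real (vnorm b)) \<cdot>\<^sub>v b"
  using arn V unfolding unitary_arnoldi_def by auto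

lemma arnj: assumes "1 \<le> j" "j \<le> k"
  shows "v j = V *\<^sub>v q j"
    "1 < j \<Longrightarrow> v (j-1) \<bullet>c q (j-1) \<noteq> 0"
    "1 < j \<Longrightarrow> u (j-1) j = - (v j \<bullet>c q (j-1)) / (v (j-1) \<bullet>c q (j-1))"
    "l j j = (v j \<bullet>c q j) + u (j-1) j * (v (j-1) \<bullet>c q j)"
    "vnorm (qt j) \<noteq> 0" "l (j+1) j = complex_of_real (vnorm (qt j))"
    "q (j+1) = (1 / l (j+1) j) \<cdot>\<^sub>v qt j"
proof -
  have "j \<in> {1..k}" using assms by auto
  note A = arn[unfolded unitary_arnoldi_def, THEN conjunct2, THEN conjunct2, THEN conjunct2,
    THEN conjunct2, rule_format, OF this]
  show "v j = V *\<^sub>v q j" using A by simp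
  show "1 < j \<Longrightarrow> v (j-1) \<bullet>c q (j-1) \<noteq> 0" using A by simp
  show "1 < j \<Longrightarrow> u (j-1) j = - (v j \<bullet>c q (j-1)) / (v (j-1) \<bullet>c q (j-1))" using A by simp
  show "l j j = (v j \<bullet>c q j) + u (j-1) j * (v (j-1) \<bullet>c q j)" using A by simp
  show "vnorm (qt j) \<noteq> 0" "l (j+1) j = complex_of_real (vnorm (qt j))"
    "q (j+1) = (1 / l (j+1) j) \<cdot>\<^sub>v qt j" using A unfolding qt_def Let_def by blast+
qed

lemma vnb: "vnorm b > 0" using vnorm_pos[OF b] .

lemma carr: "j \<le> k + 1 \<Longrightarrow> q j \<in> carrier_vec N" "j \<le> k \<Longrightarrow> v j \<in> carrier_vec N"
proof -
  have *: "j \<le> k + 1 \<longrightarrow> q j \<in> carrier_vec N" for j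
  proof (induction j rule: nat_less_induct)
    case (1 j)
    show ?case
    proof (cases "j \<le> 1")
      case True
      then consider "j = 0" | "j = 1" by linarith
      then show ?thesis using arn0 b by cases auto
    next
      case False
      then obtain i where i: "j = i + 1" "1 \<le> i" by (metis add.commute le_add1 less_imp_Suc_add not_le_imp_less plus_1_eq_Suc)
      show ?thesis
      proof
        assume "j \<le> k + 1"
        hence ik: "i \<le> k" using i by simp
        have qi: "q i \<in> carrier_vec N" using 1 i ik by auto
        have qi1: "q (i-1) \<in> carrier_vec N" using 1 i ik by auto
        have vi: "v i \<in> carrier_vec N" using arnj(1)[OF i(2) ik] qi V by simp
        have vi1: "v (i-1) \<in> carrier_vec N"
        proof (cases "i = 1")
          case True thus ?thesis using arn0 by simp
        next
          case False thus ?thesis using arnj(1)[of "i-1"] i ik qi1 V by simp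
        qed
        have "qt i \<in> carrier_vec N" unfolding qt_def using vi vi1 qi by simp
        thus "q j \<in> carrier_vec N" using arnj(7)[OF i(2) ik] i by simp
      qed
    qed
  qed
  show "j \<le> k + 1 \<Longrightarrow> q j \<in> carrier_vec N" using * by simp
  show "j \<le> k \<Longrightarrow> v j \<in> carrier_vec N"
  proof (cases "j = 0")
    case True thus ?thesis using arn0 by simp
  next
    case False
    assume "j \<le> k" thus ?thesis using False arnj(1)[of j] * V by simp
  qed
qed

lemma Ycar: "1 \<le> m \<Longrightarrow> m \<le> k + 1 \<Longrightarrow> Y m \<in> carrier_vec N"
  unfolding Y_def using carr(1)[of m] carr(1)[of "m-1"] by simp

lemma VY: assumes "1 \<le> j" "j \<le> k" shows "V *\<^sub>v Y j = v j + u (j-1) j \<cdot>\<^sub>v v (j-1)"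
proof -
  have q: "q j \<in> carrier_vec N" "q (j-1) \<in> carrier_vec N" using carr assms by auto
  have "V *\<^sub>v Y j = V *\<^sub>v q j + u (j-1) j \<cdot>\<^sub>v (V *\<^sub>v q (j-1))"
    unfolding Y_def using mult_add_distrib_mat_vec[OF V(1) q(1) smult_carrier_vec[THEN iffD2, OF q(2)]]
      mult_mat_vec[OF V(1) q(2)] by simp
  also have "V *\<^sub>v q (j-1) = v (j-1)"
  proof (cases "j = 1")
    case True thus ?thesis using arn0 V by simp
  next
    case False thus ?thesis using arnj(1)[of "j-1"] assms by simp
  qed
  finally show ?thesis using arnj(1)[OF assms] by simp
qed

lemma qt_alt: assumes "1 \<le> j" "j \<le> k" shows "qt j = V *\<^sub>v Y j - l j j \<cdot>\<^sub>v q j"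
proof -
  have c: "v j \<in> carrier_vec N" "v (j-1) \<in> carrier_vec N" "q j \<in> carrier_vec N" using carr assms by auto
  show ?thesis unfolding VY[OF assms] qt_def using c by (intro eq_vecI) auto
qed

lemma lnz: assumes "1 \<le> j" "j \<le> k" shows "l (j+1) j \<noteq> 0"
  using arnj(5,6)[OF assms] by simp

lemma qnext: assumes "1 \<le> j" "j \<le> k" shows "q (j+1) = (1 / l (j+1) j) \<cdot>\<^sub>v (V *\<^sub>v Y j - l j j \<cdot>\<^sub>v q j)"
  using arnj(7)[OF assms] qt_alt[OF assms] by simp

lemma rel: assumes "1 \<le> j" "j \<le> k"
  shows "V *\<^sub>v Y j = l j j \<cdot>\<^sub>v q j + l (j+1) j \<cdot>\<^sub>v q (j+1)"
proof -
  have c: "V *\<^sub>v Y j \<in> carrier_vec N" "q j \<in> carrier_vec N" using carr Ycar[of j] assms V by auto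
  show ?thesis unfolding qnext[OF assms] using c lnz[OF assms] V by (intro eq_vecI) (auto simp: field_simps)
qed

lemma l_ip: assumes "1 \<le> j" "j \<le> k" shows "l j j = (V *\<^sub>v Y j) \<bullet>c q j"
proof -
  have c: "v j \<in> carrier_vec N" "v (j-1) \<in> carrier_vec N" "q j \<in> carrier_vec N" using carr assms by auto
  show ?thesis unfolding VY[OF assms] arnj(4)[OF assms]
    using ip_addl[OF c(1) _ c(3), of "u (j - 1) j \<cdot>\<^sub>v v (j - 1)"] ip_smultl[OF c(3) c(2)] c by simp
qed

abbreviation QS :: "nat \<Rightarrow> complex vec set" where "QS j \<equiv> sp N (\<lambda>c. q (c+1)) j"

lemma Qf_car: "j \<le> k+1 \<Longrightarrow> \<forall>c<j. q (c+1) \<in> carrier_vec N"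
  using carr(1) by auto

lemma QS_subsp: "j \<le> k+1 \<Longrightarrow> subsp N (QS j)"
  by (rule sp_subsp[OF Qf_car])

lemma QS_mono: "j \<le> j' \<Longrightarrow> j' \<le> k+1 \<Longrightarrow> QS j \<subseteq> QS j'"
  by (rule sp_mono[OF _ Qf_car])

lemma q_in_QS: assumes "1 \<le> m" "m \<le> j" "j \<le> k+1" shows "q m \<in> QS j"
proof -
  have "(\<lambda>c. q (c+1)) (m-1) \<in> QS j" using assms by (intro sp_gen carr) auto
  thus ?thesis using assms by simp
qed

lemma Y_in_QS: assumes "1 \<le> m" "m \<le> j" "j \<le> k+1" shows "Y m \<in> QS j"
proof (cases "m = 1")
  case True
  have "Y m = q 1" unfolding Y_def True using arn0 carr(1)[of 1] by (intro eq_vecI) auto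
  thus ?thesis using q_in_QS[of 1 j] assms True by simp
next
  case False
  note D = subspD[OF QS_subsp[OF assms(3)]]
  have "q m \<in> QS j" "q (m-1) \<in> QS j" using assms False q_in_QS[of m j] q_in_QS[of "m-1" j] by auto
  thus ?thesis unfolding Y_def using D by blast
qed

lemma orth_QS: assumes x: "x \<in> carrier_vec N" and j: "j \<le> k+1"
  and o: "\<And>m. 1 \<le> m \<Longrightarrow> m \<le> j \<Longrightarrow> x \<bullet>c q m = 0" and s: "s \<in> QS j"
  shows "x \<bullet>c s = 0"
proof -
  have "QS j \<subseteq> {y \<in> carrier_vec N. x \<bullet>c y = 0}"
    by (rule sp_sub[OF subsp_orth[OF x]]) (use o Qf_car[OF j] in auto)
  thus ?thesis using s by auto
qed

lemma DEC: assumes "1 \<le> i" "i \<le> k+1" shows "\<exists>c s. s \<in> QS (i-1) \<and> q i = c \<cdot>\<^sub>v q 1 + V *\<^sub>v s"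
  using assms
proof (induction i)
  case 0 thus ?case by simp
next
  case (Suc i)
  show ?case
  proof (cases "i = 0")
    case True
    have "0\<^sub>v N \<in> QS (Suc 0 - 1) \<and> q (Suc 0) = 1 \<cdot>\<^sub>v q 1 + V *\<^sub>v 0\<^sub>v N"
      using carr(1)[of 1] V subspD(2)[OF QS_subsp[of 0]] by (auto intro!: eq_vecI)
    thus ?thesis using True by blast
  next
    case False
    hence i: "1 \<le> i" "i \<le> k" using Suc by auto
    then obtain c s where cs: "s \<in> QS (i-1)" "q i = c \<cdot>\<^sub>v q 1 + V *\<^sub>v s" using Suc by auto
    define L where "L = l (i+1) i"
    have L: "L \<noteq> 0" using lnz[OF i] L_def by simp
    define s' where "s' = (1 / L) \<cdot>\<^sub>v (Y i - l i i \<cdot>\<^sub>v s)"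
    have sc: "s \<in> carrier_vec N" using cs(1) unfolding sp_def by auto
    have Yc: "Y i \<in> carrier_vec N" using Ycar i by auto
    have "s \<in> QS i" using cs(1) QS_mono[of "i-1" i] i by auto
    moreover have "Y i \<in> QS i" using Y_in_QS[of i i] i by auto
    ultimately have s'Q: "s' \<in> QS i" unfolding s'_def
      using subsp_lin[OF QS_subsp[of i]] i by simp
    have Vs': "V *\<^sub>v s' = (1 / L) \<cdot>\<^sub>v (V *\<^sub>v Y i - l i i \<cdot>\<^sub>v (V *\<^sub>v s))"
      unfolding s'_def using V sc Yc
      by (simp add: mult_mat_vec mult_minus_distrib_mat_vec)
    have q1: "q 1 \<in> carrier_vec N" using carr(1)[of 1] by simp
    have alg: "Q = (- li * c / L) * q1 + (1 / L) * (A - li * W)"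
      if "Q = (1 / L) * (A - li * qi)" "qi = c * q1 + W" for Q A li qi q1 W
      using that by (simp add: diff_divide_distrib add_divide_distrib algebra_simps)
    have "q (Suc i) = (- l i i * c / L) \<cdot>\<^sub>v q 1 + V *\<^sub>v s'"
    proof (rule eq_vecI)
      fix r assume r: "r < dim_vec ((- l i i * c / L) \<cdot>\<^sub>v q 1 + V *\<^sub>v s')"
      hence r: "r < N" using q1 V by simp
      have e1: "q (Suc i) $ r = (1 / L) * ((V *\<^sub>v Y i) $ r - l i i * q i $ r)"
        using qnext[OF i] r L_def V Yc carr(1)[of i] i by simp
      have e2: "q i $ r = c * q 1 $ r + (V *\<^sub>v s) $ r" using cs(2) r q1 V sc by simp
      have e3: "(V *\<^sub>v s') $ r = (1 / L) * ((V *\<^sub>v Y i) $ r - l i i * (V *\<^sub>v s) $ r)"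
        unfolding Vs' using r V sc Yc by simp
      show "q (Suc i) $ r = ((- l i i * c / L) \<cdot>\<^sub>v q 1 + V *\<^sub>v s') $ r"
        using alg[OF e1 e2] e3 r q1 V by simp
    qed (use q1 V carr(1)[of "Suc i"] i in simp)
    thus ?thesis using s'Q by auto
  qed
qed

definition ON :: "nat \<Rightarrow> bool" where
  "ON n \<longleftrightarrow> (\<forall>a b. 1 \<le> a \<longrightarrow> a \<le> n \<longrightarrow> 1 \<le> b \<longrightarrow> b \<le> n \<longrightarrow> q a \<bullet>c q b = (if a = b then 1 else 0))"

lemma orth_step: assumes j: "2 \<le> j" "j \<le> k" and on: "ON j" and i: "1 \<le> i" "i \<le> j - 1"
  shows "(V *\<^sub>v Y j) \<bullet>c q i = 0"
proof -
  have j1: "1 \<le> j" using j by simp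
  have VYc: "V *\<^sub>v Y j \<in> carrier_vec N" using Ycar[of j] j V by simp
  have Yc: "Y j \<in> carrier_vec N" using Ycar[of j] j by simp
  have qc: "\<And>m. m \<le> k+1 \<Longrightarrow> q m \<in> carrier_vec N" using carr(1) by simp
  have onq: "q a \<bullet>c q b = (if a = b then 1 else 0)" if "1 \<le> a" "a \<le> j" "1 \<le> b" "b \<le> j" for a b
    using on that unfolding ON_def by blast
  \<comment> \<open>the (j-1) component vanishes by choice of u\<close>
  have vj: "v j = V *\<^sub>v q j" "v (j-1) = V *\<^sub>v q (j-1)" using arnj(1)[of j] arnj(1)[of "j-1"] j by auto
  have nd: "v (j-1) \<bullet>c q (j-1) \<noteq> 0" using arnj(2)[OF j1 j(2)] j by simp
  have a_last: "(V *\<^sub>v Y j) \<bullet>c q (j-1) = 0"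
  proof -
    have c: "v j \<in> carrier_vec N" "v (j-1) \<in> carrier_vec N" "q (j-1) \<in> carrier_vec N" using carr j by auto
    have "(V *\<^sub>v Y j) \<bullet>c q (j-1) = v j \<bullet>c q (j-1) + u (j-1) j * (v (j-1) \<bullet>c q (j-1))"
      unfolding VY[OF j1 j(2)]
      using ip_addl[OF c(1) _ c(3), of "u (j - 1) j \<cdot>\<^sub>v v (j - 1)"] ip_smultl[OF c(3) c(2)] c by simp
    also have "\<dots> = 0" using arnj(3)[OF j1 j(2)] j nd by (simp add: field_simps)
    finally show ?thesis .
  qed
  have Yorth: "Y j \<bullet>c s = 0" if "s \<in> QS (j-2)" for s
  proof (rule orth_QS[OF Yc _ _ that])
    fix m assume m: "1 \<le> m" "m \<le> j - 2"
    have c: "q j \<in> carrier_vec N" "q (j-1) \<in> carrier_vec N" "q m \<in> carrier_vec N" using qc j m by auto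
    have "Y j \<bullet>c q m = q j \<bullet>c q m + u (j-1) j * (q (j-1) \<bullet>c q m)"
      unfolding Y_def using ip_addl[OF c(1) _ c(3), of "u (j - 1) j \<cdot>\<^sub>v q (j - 1)"] ip_smultl[OF c(3) c(2)] c by simp
    also have "q j \<bullet>c q m = 0" using onq[of j m] m j by auto
    also have "q (j-1) \<bullet>c q m = 0" using onq[of "j-1" m] m j by auto
    finally show "Y j \<bullet>c q m = 0" by simp
  qed (use j in simp)
  have a_mult: "\<exists>c s. s \<in> QS (i'-1) \<and> q i' = c \<cdot>\<^sub>v q 1 + V *\<^sub>v s \<and> (V *\<^sub>v Y j) \<bullet>c q i' = cnj c * ((V *\<^sub>v Y j) \<bullet>c q 1)"
    if i': "1 \<le> i'" "i' \<le> j - 1" for i'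
  proof -
    have ii: "1 \<le> i'" "i' \<le> k+1" using i' j by auto
    from DEC[OF ii] obtain c s where cs: "s \<in> QS (i'-1)" "q i' = c \<cdot>\<^sub>v q 1 + V *\<^sub>v s" by blast
    have sc: "s \<in> carrier_vec N" using cs(1) unfolding sp_def by auto
    have q1: "q 1 \<in> carrier_vec N" using qc j by auto
    have "i'-1 \<le> j-2" "j-2 \<le> k+1" using i' j by auto
    from QS_mono[OF this] have sQ: "s \<in> QS (j-2)" using cs(1) by auto
    have "(V *\<^sub>v Y j) \<bullet>c q i' = cnj c * ((V *\<^sub>v Y j) \<bullet>c q 1) + (V *\<^sub>v Y j) \<bullet>c (V *\<^sub>v s)"
      unfolding cs(2) using ip_addr[OF _ _ VYc, of "c \<cdot>\<^sub>v q 1" "V *\<^sub>v s"] ip_smultr[OF q1, of "V *\<^sub>v Y j" c] q1 sc V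
      by simp
    also have "(V *\<^sub>v Y j) \<bullet>c (V *\<^sub>v s) = Y j \<bullet>c s" using unitary_ip[OF V Yc sc] .
    also have "\<dots> = 0" using Yorth[OF sQ] .
    finally show ?thesis using cs by auto
  qed
  have jj: "1 \<le> j-1" "j-1 \<le> j-1" using j by auto
  from a_mult[OF jj] obtain c s where cs0: "s \<in> QS (j-1-1)" "q (j-1) = c \<cdot>\<^sub>v q 1 + V *\<^sub>v s"
    "(V *\<^sub>v Y j) \<bullet>c q (j-1) = cnj c * ((V *\<^sub>v Y j) \<bullet>c q 1)" by (elim exE conjE)
  have "j-1-1 = j-2" by simp
  note cs = cs0[unfolded this]
  have "c \<noteq> 0"
  proof
    assume c0: "c = 0"
    have sc: "s \<in> carrier_vec N" using cs(1) unfolding sp_def by auto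
    have qj1: "q (j-1) \<in> carrier_vec N" using qc j by auto
    have q1: "q 1 \<in> carrier_vec N" using qc j by auto
    have "q (j-1) = V *\<^sub>v s" unfolding cs(2) c0 using q1 V sc by (intro eq_vecI) auto
    hence "v (j-1) \<bullet>c q (j-1) = q (j-1) \<bullet>c s" using vj unitary_ip[OF V qj1 sc] by simp
    also have "\<dots> = 0"
    proof (rule orth_QS[OF qj1 _ _ cs(1)])
      fix m assume "1 \<le> m" "m \<le> j-2" thus "q (j-1) \<bullet>c q m = 0" using onq[of "j-1" m] j by auto
    qed (use j in simp)
    finally show False using nd by simp
  qed
  hence a1: "(V *\<^sub>v Y j) \<bullet>c q 1 = 0" using cs(3) a_last by simp
  show ?thesis using a_mult[OF i] a1 by auto
qed

lemma ip_q_next: assumes j: "1 \<le> j" "j \<le> k" and i: "i \<le> k+1"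
  shows "q (j+1) \<bullet>c q i = (1 / l (j+1) j) * ((V *\<^sub>v Y j) \<bullet>c q i - l j j * (q j \<bullet>c q i))"
proof -
  have c: "V *\<^sub>v Y j \<in> carrier_vec N" "q j \<in> carrier_vec N" "q i \<in> carrier_vec N"
    using Ycar[of j] j V carr(1)[of j] carr(1)[of i] i by auto
  show ?thesis unfolding qnext[OF j]
    using ip_smultl[OF c(3), of "V *\<^sub>v Y j - l j j \<cdot>\<^sub>v q j"] ip_minusl[OF c(1) _ c(3), of "l j j \<cdot>\<^sub>v q j"]
      ip_smultl[OF c(3) c(2)] c by simp
qed

lemma q_norm_next: assumes j: "1 \<le> j" "j \<le> k" shows "q (j+1) \<bullet>c q (j+1) = 1"
proof -
  have c: "qt j \<in> carrier_vec N" using carr(1)[of "j+1"] arnj(7)[OF j] lnz[OF j] j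
    by (metis add_le_mono1 smult_carrier_vec div_0 mult_zero_left divide_eq_0_iff one_neq_zero)
  define L where "L = vnorm (qt j)"
  have L: "L \<noteq> 0" using arnj(5)[OF j] L_def by simp
  have "q (j+1) \<bullet>c q (j+1) = (1 / complex_of_real L) * (cnj (1 / complex_of_real L) * (qt j \<bullet>c qt j))"
    unfolding arnj(7)[OF j] arnj(6)[OF j] L_def[symmetric]
    using ip_smultl[of "(1 / complex_of_real L) \<cdot>\<^sub>v qt j" N] ip_smultr[OF c] c by simp
  also have "qt j \<bullet>c qt j = complex_of_real (L^2)" using ip_self[OF c] L_def by simp
  finally show ?thesis using L by (simp add: power2_eq_square field_simps)
qed

lemma q1_norm: "q 1 \<bullet>c q 1 = 1"
proof -
  have "q 1 \<bullet>c q 1 = (1 / complex_of_real (vnorm b)) * (cnj (1 / complex_of_real (vnorm b)) * (b \<bullet>c b))"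
    unfolding arn0(4) using ip_smultl[of "(1 / complex_of_real (vnorm b)) \<cdot>\<^sub>v b" N] ip_smultr[OF b(1)] b by simp
  also have "b \<bullet>c b = complex_of_real ((vnorm b)^2)" using ip_self[OF b(1)] by simp
  finally show ?thesis using vnb by (simp add: power2_eq_square field_simps)
qed

lemma ON_all: assumes "1 \<le> n" "n \<le> k+1" shows "ON n"
  using assms
proof (induction n)
  case 0 thus ?case by simp
next
  case (Suc j)
  show ?case
  proof (cases "j = 0")
    case True
    show ?thesis unfolding ON_def True using q1_norm by auto
  next
    case False
    hence j: "1 \<le> j" "j \<le> k" using Suc by auto
    have on: "ON j" using Suc j by auto
    have onq: "q a \<bullet>c q b = (if a = b then 1 else 0)" if "1 \<le> a" "a \<le> j" "1 \<le> b" "b \<le> j" for a b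
      using on that unfolding ON_def by blast
    have new: "q (j+1) \<bullet>c q i = 0" if i: "1 \<le> i" "i \<le> j" for i
    proof -
      have e: "(V *\<^sub>v Y j) \<bullet>c q i = l j j * (q j \<bullet>c q i)"
      proof (cases "i = j")
        case True thus ?thesis using l_ip[OF j] onq[of j j] j by simp
      next
        case False
        hence "2 \<le> j" "i \<le> j - 1" using i by auto
        hence "(V *\<^sub>v Y j) \<bullet>c q i = 0" using orth_step[OF _ j(2) on i(1)] by simp
        moreover have "q j \<bullet>c q i = 0" using onq[of j i] i j False by auto
        ultimately show ?thesis by simp
      qed
      have "i \<le> k+1" using i j by simp
      from ip_q_next[OF j this] show ?thesis unfolding e by simp
    qed
    have new': "q i \<bullet>c q (j+1) = 0" if i: "1 \<le> i" "i \<le> j" for i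
      using ip_conj[of "q i" N "q (j+1)"] new[OF i] carr(1)[of i] carr(1)[of "j+1"] i j by simp
    show ?thesis unfolding ON_def
    proof (intro allI impI)
      fix a a2 assume ab: "1 \<le> a" "a \<le> Suc j" "1 \<le> a2" "a2 \<le> Suc j"
      show "q a \<bullet>c q a2 = (if a = a2 then 1 else 0)"
      proof (cases "a = Suc j")
        case True
        show ?thesis
        proof (cases "a2 = Suc j")
          case True thus ?thesis using \<open>a = Suc j\<close> q_norm_next[OF j] by simp
        next
          case False thus ?thesis using \<open>a = Suc j\<close> new[of a2] ab by simp
        qed
      next
        case False
        show ?thesis
        proof (cases "a2 = Suc j")
          case True thus ?thesis using False new'[of a] ab by simp
        next
          case False2: False
          thus ?thesis using False onq[of a a2] ab by simp
        qed
      qed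
    qed
  qed
qed

lemma orthonormal: "1 \<le> a \<Longrightarrow> a \<le> k+1 \<Longrightarrow> 1 \<le> a' \<Longrightarrow> a' \<le> k+1 \<Longrightarrow> q a \<bullet>c q a' = (if a = a' then 1 else 0)"
  using ON_all[of "k+1"] unfolding ON_def by simp

end



lemma pow_Suc_left: fixes A :: "complex mat" assumes A: "A \<in> carrier_mat n n"
  shows "A ^\<^sub>m (Suc c) = A * A ^\<^sub>m c"
proof (induction c)
  case 0 thus ?case using A by simp
next
  case (Suc c)
  have "A ^\<^sub>m Suc (Suc c) = (A * A ^\<^sub>m c) * A" using Suc by simp
  also have "\<dots> = A * (A ^\<^sub>m c * A)" using A by (simp add: assoc_mult_mat[of _ n n _ n _ n])
  finally show ?case by simp
qed

lemma Umat_idx: "r < j \<Longrightarrow> c < j \<Longrightarrow> Umat u j $$ (r,c) = (if r = c then 1 else if c = r + 1 then u (r+1) (c+1) else 0)"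
  unfolding Umat_def by simp
lemma Lmat_idx: "r < j \<Longrightarrow> c < j \<Longrightarrow> Lmat l j $$ (r,c) = (if r = c then l (r+1) (r+1) else if r = c + 1 then l (r+1) (c+1) else 0)"
  unfolding Lmat_def by simp
lemma Umat_carrier[simp]: "Umat u j \<in> carrier_mat j j" unfolding Umat_def by (rule mat_carrier)
lemma Lmat_carrier[simp]: "Lmat l j \<in> carrier_mat j j" unfolding Lmat_def by (rule mat_carrier)
lemma Umat_dim[simp]: "dim_row (Umat u j) = j" "dim_col (Umat u j) = j" unfolding Umat_def by simp_all
lemma Lmat_dim[simp]: "dim_row (Lmat l j) = j" "dim_col (Lmat l j) = j" unfolding Lmat_def by simp_all
lemma Tmat_carrier[simp]: "Tmat c1 c2 u l j \<in> carrier_mat j j" unfolding Tmat_def by simp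
lemma Tmat_idx: "r < j \<Longrightarrow> c < j \<Longrightarrow> Tmat c1 c2 u l j $$ (r,c) =
   complex_of_real c1 * (if r = c then 1 else if c = r + 1 then u (r+1) (c+1) else 0)
   + complex_of_real c2 * (if r = c then l (r+1) (r+1) else if r = c + 1 then l (r+1) (c+1) else 0)"
  unfolding Tmat_def by (simp add: Umat_idx Lmat_idx)
lemma Qmat_gmat: "Qmat q N j = gmat N (\<lambda>c. q (c+1)) j"
  unfolding Qmat_def gmat_def by simp

lemma gmat_ip: fixes x :: "complex vec" assumes a: "a \<in> carrier_vec j" and x: "x \<in> carrier_vec n"
  shows "(gmat n f j *\<^sub>v a) \<bullet>c x = (\<Sum>c<j. a $ c * (f c \<bullet>c x))"
proof -
  have "(gmat n f j *\<^sub>v a) \<bullet>c x = (\<Sum>r<n. (\<Sum>c<j. f c $ r * a $ c) * cnj (x $ r))"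
    unfolding cip[OF x] gmat_mv[OF a] by (intro sum.cong) auto
  also have "\<dots> = (\<Sum>c<j. a $ c * (\<Sum>r<n. f c $ r * cnj (x $ r)))"
    by (simp add: sum_distrib_left sum_distrib_right mult_ac) (rule sum.swap)
  also have "\<dots> = (\<Sum>c<j. a $ c * (f c \<bullet>c x))" unfolding cip[OF x] ..
  finally show ?thesis .
qed

lemma gmat_mult: fixes M :: "complex mat" assumes M: "M \<in> carrier_mat n n" and f: "\<forall>c<j. f c \<in> carrier_vec n"
  shows "M * gmat n f j = gmat n (\<lambda>c. M *\<^sub>v f c) j"
  using M f unfolding gmat_def by (intro eq_matI) (auto simp: col_def scalar_prod_def)

lemma mv_idx: fixes A :: "complex mat" assumes "A \<in> carrier_mat n m" "x \<in> carrier_vec m" "i < n"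
  shows "(A *\<^sub>v x) $ i = (\<Sum>j<m. A $$ (i,j) * x $ j)"
  using assms by (simp add: scalar_prod_def lessThan_atLeast0)

lemma ip_lin3: fixes x a1 a2 a3 y :: "complex vec"
  assumes c: "x \<in> carrier_vec n" "y \<in> carrier_vec n"
    and e: "\<And>r. r < n \<Longrightarrow> x $ r = \<alpha> * a1 $ r + \<beta> * a2 $ r + \<gamma> * a3 $ r"
  shows "x \<bullet>c y = \<alpha> * (a1 \<bullet>c y) + \<beta> * (a2 \<bullet>c y) + \<gamma> * (a3 \<bullet>c y)"
proof -
  have "x \<bullet>c y = (\<Sum>r<n. \<alpha> * (a1 $ r * cnj (y $ r)) + \<beta> * (a2 $ r * cnj (y $ r)) + \<gamma> * (a3 $ r * cnj (y $ r)))"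
    unfolding cip[OF c(2)] using e by (intro sum.cong) (auto simp: algebra_simps)
  thus ?thesis unfolding cip[OF c(2)] by (simp add: sum.distrib sum_distrib_left)
qed

locale arnD = arn +
  fixes D :: "complex mat" and c1 c2 :: real
  assumes D: "D = complex_of_real c1 \<cdot>\<^sub>m 1\<^sub>m N + complex_of_real c2 \<cdot>\<^sub>m V"
begin

lemma Dcar: "D \<in> carrier_mat N N" using D V by simp

lemma Dmv: assumes x: "x \<in> carrier_vec N"
  shows "D *\<^sub>v x = complex_of_real c1 \<cdot>\<^sub>v x + complex_of_real c2 \<cdot>\<^sub>v (V *\<^sub>v x)"
proof (rule eq_vecI)
  fix i assume "i < dim_vec (complex_of_real c1 \<cdot>\<^sub>v x + complex_of_real c2 \<cdot>\<^sub>v (V *\<^sub>v x))"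
  hence i: "i < N" using V by simp
  have "(D *\<^sub>v x) $ i = (\<Sum>j<N. D $$ (i,j) * x $ j)" by (rule mv_idx[OF Dcar x i])
  also have "\<dots> = (\<Sum>j<N. (complex_of_real c1 * (if i = j then 1 else 0) + complex_of_real c2 * V $$ (i,j)) * x $ j)"
    using i V unfolding D by (intro sum.cong) auto
  also have "\<dots> = (\<Sum>j<N. (if i = j then complex_of_real c1 * x $ j else 0) + complex_of_real c2 * (V $$ (i,j) * x $ j))"
    by (intro sum.cong) (auto simp: algebra_simps)
  also have "\<dots> = complex_of_real c1 * x $ i + complex_of_real c2 * (V *\<^sub>v x) $ i"
    unfolding mv_idx[OF V(1) x i] using i by (simp add: sum.distrib sum_distrib_left)
  finally show "(D *\<^sub>v x) $ i = (complex_of_real c1 \<cdot>\<^sub>v x + complex_of_real c2 \<cdot>\<^sub>v (V *\<^sub>v x)) $ i"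
    using i x V by simp
qed (use V Dcar in simp)

definition Kf :: "nat \<Rightarrow> complex vec" where "Kf c = (D ^\<^sub>m c) *\<^sub>v b"

lemma Kf_car: "Kf c \<in> carrier_vec N" unfolding Kf_def by (rule mult_mat_vec_carrier[OF pow_carrier_mat[OF Dcar] b(1)])
lemma Kf_Suc: "Kf (Suc c) = D *\<^sub>v Kf c"
  unfolding Kf_def pow_Suc_left[OF Dcar] using Dcar b by (simp add: assoc_mult_mat_vec[of _ N N _ N])
lemma Kf_0: "Kf 0 = b" unfolding Kf_def using b Dcar by simp

lemma krylov_sp: "krylov D b j = sp N Kf j"
  unfolding krylov_def sp_def gmat_def Kf_def using b by simp

abbreviation KS where "KS j \<equiv> sp N Kf j"

lemma KS_subsp: "subsp N (KS j)" by (rule sp_subsp) (simp add: Kf_car)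
lemma KS_mono: "j \<le> j' \<Longrightarrow> KS j \<subseteq> KS j'" by (rule sp_mono) (auto simp: Kf_car)

lemma D_KS: assumes "y \<in> KS j" shows "D *\<^sub>v y \<in> KS (Suc j)"
proof -
  have "KS j \<subseteq> {y \<in> carrier_vec N. D *\<^sub>v y \<in> KS (Suc j)}"
  proof (rule sp_sub[OF subsp_pre[OF Dcar KS_subsp]], intro allI impI)
    fix c assume "c < j"
    have "D *\<^sub>v Kf c \<in> KS (Suc j)" unfolding Kf_Suc[symmetric] using \<open>c < j\<close> by (intro sp_gen Kf_car) simp
    thus "Kf c \<in> {y \<in> carrier_vec N. D *\<^sub>v y \<in> KS (Suc j)}" using Kf_car by simp
  qed
  thus ?thesis using assms by auto
qed

lemma Vq_QS: assumes "1 \<le> m" "m \<le> k" shows "V *\<^sub>v q m \<in> QS (m+1)"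
  using assms
proof (induction m)
  case 0 thus ?case by simp
next
  case (Suc m)
  have WW: "subsp N (QS (Suc m + 1))" using QS_subsp[of "Suc m + 1"] Suc.prems by simp
  note W = subspD[OF WW]
  have VY: "V *\<^sub>v Y (Suc m) \<in> QS (Suc m + 1)"
    unfolding rel[OF Suc.prems] using W Suc.prems q_in_QS[of "Suc m" "Suc m + 1"] q_in_QS[of "Suc m + 1" "Suc m + 1"]
    by simp
  show ?case
  proof (cases "m = 0")
    case True
    have "Y 1 = q 1" unfolding Y_def using arn0 carr(1)[of 1] by (intro eq_vecI) auto
    thus ?thesis using VY True by simp
  next
    case False
    have IH: "V *\<^sub>v q m \<in> QS (Suc m + 1)" using Suc False QS_mono[of "m+1" "Suc m + 1"] by auto
    have c: "q (Suc m) \<in> carrier_vec N" "q m \<in> carrier_vec N" using carr Suc.prems by auto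
    have "V *\<^sub>v q (Suc m) = V *\<^sub>v Y (Suc m) - u m (Suc m) \<cdot>\<^sub>v (V *\<^sub>v q m)"
      unfolding Y_def using c V by (intro eq_vecI) (auto simp: mult_add_distrib_mat_vec mult_mat_vec)
    thus ?thesis using subsp_lin(2)[OF WW VY W(4)[OF IH]] by simp
  qed
qed

lemma D_QS: assumes "y \<in> QS j" "j \<le> k" shows "D *\<^sub>v y \<in> QS (Suc j)"
proof -
  have WW: "subsp N (QS (Suc j))" using QS_subsp[of "Suc j"] assms by simp
  have "QS j \<subseteq> {y \<in> carrier_vec N. D *\<^sub>v y \<in> QS (Suc j)}"
  proof (rule sp_sub[OF subsp_pre[OF Dcar WW]], intro allI impI)
    fix c assume c: "c < j"
    have qc: "q (c+1) \<in> carrier_vec N" using carr(1)[of "c+1"] c assms by simp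
    have "q (c+1) \<in> QS (Suc j)" using q_in_QS[of "c+1" "Suc j"] c assms by simp
    moreover have "V *\<^sub>v q (c+1) \<in> QS (Suc j)"
      using Vq_QS[of "c+1"] QS_mono[of "c+2" "Suc j"] c assms by auto
    ultimately have "D *\<^sub>v q (c+1) \<in> QS (Suc j)" unfolding Dmv[OF qc]
      using subsp_lin(1)[OF WW] by simp
    thus "q (c+1) \<in> {y \<in> carrier_vec N. D *\<^sub>v y \<in> QS (Suc j)}" using qc by simp
  qed
  thus ?thesis using assms by auto
qed

lemma b_eq: "b = complex_of_real (vnorm b) \<cdot>\<^sub>v q 1"
  unfolding arn0(4) using b vnb by (intro eq_vecI) auto

lemma Kf_QS: "c < k \<Longrightarrow> Kf c \<in> QS (c+1)"
proof (induction c)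
  case 0
  have "q 1 \<in> QS 1" using q_in_QS[of 1 1] by simp
  thus ?case unfolding Kf_0 using subspD(4)[OF QS_subsp[of 1]] b_eq by (metis One_nat_def add.commute le_add2 plus_1_eq_Suc)
next
  case (Suc c)
  thus ?case unfolding Kf_Suc using D_QS[of "Kf c" "c+1"] by simp
qed

lemma KS_QS: "KS k \<subseteq> QS k"
proof (rule sp_sub)
  show "subsp N (QS k)" using QS_subsp[of k] by simp
  show "\<forall>c<k. Kf c \<in> QS k"
  proof (intro allI impI)
    fix c assume c: "c < k"
    show "Kf c \<in> QS k" using Kf_QS[OF c] QS_mono[of "c+1" k] c by auto
  qed
qed

lemma V_via_D: assumes "c2 \<noteq> 0" "y \<in> carrier_vec N"
  shows "V *\<^sub>v y = (1 / complex_of_real c2) \<cdot>\<^sub>v (D *\<^sub>v y - complex_of_real c1 \<cdot>\<^sub>v y)"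
  unfolding Dmv[OF assms(2)] using assms V by (intro eq_vecI) (auto simp: field_simps)

lemma q_KS: assumes c2: "c2 \<noteq> 0" shows "1 \<le> m \<Longrightarrow> m \<le> k \<Longrightarrow> q m \<in> KS m"
proof (induction m rule: nat_less_induct)
  case (1 m)
  show ?case
  proof (cases "m = 1")
    case True
    have "Kf 0 \<in> KS 1" by (intro sp_gen Kf_car) simp
    hence "(1 / complex_of_real (vnorm b)) \<cdot>\<^sub>v b \<in> KS 1" using subspD(4)[OF KS_subsp] Kf_0 by simp
    thus ?thesis using True arn0(4) by simp
  next
    case False
    then obtain i where i: "m = Suc i" "1 \<le> i" using 1 by (metis One_nat_def Suc_pred less_one not_less not_less_eq_eq)
    have ik: "i \<le> k" using i 1 by simp
    note W = subspD[OF KS_subsp[of m]]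
    have qi: "q i \<in> KS i" using 1 i by simp
    have qim: "q i \<in> KS m" using qi KS_mono[of i m] i by auto
    have Yi: "Y i \<in> KS i"
    proof (cases "i = 1")
      case True
      have "Y 1 = q 1" unfolding Y_def using arn0 carr(1)[of 1] by (intro eq_vecI) auto
      thus ?thesis using qi True by simp
    next
      case False
      have "q (i-1) \<in> KS (i-1)" using 1 i False by simp
      hence "q (i-1) \<in> KS i" using KS_mono[of "i-1" i] by auto
      thus ?thesis unfolding Y_def using qi subspD(3,4)[OF KS_subsp] by simp
    qed
    have Yc: "Y i \<in> carrier_vec N" using Ycar[of i] i ik by simp
    have "D *\<^sub>v Y i \<in> KS m" using D_KS[OF Yi] i by simp
    moreover have "Y i \<in> KS m" using Yi KS_mono[of i m] i by auto
    ultimately have "V *\<^sub>v Y i \<in> KS m" unfolding V_via_D[OF c2 Yc]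
      using subsp_lin[OF KS_subsp] by simp
    hence "(1 / l (i+1) i) \<cdot>\<^sub>v (V *\<^sub>v Y i - l i i \<cdot>\<^sub>v q i) \<in> KS m"
      using subsp_lin[OF KS_subsp] W(4)[OF qim] by simp
    thus ?thesis using qnext[OF i(2) ik] i by simp
  qed
qed

lemma QS_KS: assumes c2: "c2 \<noteq> 0" shows "QS k \<subseteq> KS k"
proof (rule sp_sub[OF KS_subsp], intro allI impI)
  fix c assume c: "c < k"
  show "q (c+1) \<in> KS k" using q_KS[OF c2, of "c+1"] KS_mono[of "c+1" k] c by auto
qed

abbreviation YS where "YS j \<equiv> sp N (\<lambda>c. Y (c+1)) j"

lemma YS_subsp: "j \<le> k+1 \<Longrightarrow> subsp N (YS j)"
  by (rule sp_subsp) (auto intro: Ycar)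

lemma YS_QS: assumes j: "j \<le> k+1" shows "YS j \<subseteq> QS j"
proof (rule sp_sub[OF QS_subsp[OF j]], intro allI impI)
  fix c assume "c < j" thus "Y (c+1) \<in> QS j" using Y_in_QS[of "c+1" j] j by simp
qed

lemma q_YS: "1 \<le> m \<Longrightarrow> m \<le> k+1 \<Longrightarrow> q m \<in> YS m"
proof (induction m)
  case 0 thus ?case by simp
next
  case (Suc m)
  have Ym: "Y (Suc m) \<in> YS (Suc m)"
    using sp_gen[of m "Suc m" "\<lambda>c. Y (c+1)" N] Ycar[of "Suc m"] Suc.prems by simp
  show ?case
  proof (cases "m = 0")
    case True
    have "Y 1 = q 1" unfolding Y_def using arn0 carr(1)[of 1] by (intro eq_vecI) auto
    thus ?thesis using Ym True by simp
  next
    case False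
    have W: "subsp N (YS (Suc m))" using YS_subsp[of "Suc m"] Suc.prems by simp
    have "q m \<in> YS m" using Suc False by simp
    hence qm: "q m \<in> YS (Suc m)" using sp_mono[of m "Suc m" "\<lambda>c. Y (c+1)" N] Ycar Suc.prems by auto
    have c: "q m \<in> carrier_vec N" "q (Suc m) \<in> carrier_vec N" using carr Suc.prems by auto
    have "q (Suc m) = Y (Suc m) - u m (Suc m) \<cdot>\<^sub>v q m" unfolding Y_def using c by (intro eq_vecI) auto
    thus ?thesis using subsp_lin(2)[OF W Ym subspD(4)[OF W qm]] by simp
  qed
qed

lemma QS_YS: "j \<le> k+1 \<Longrightarrow> QS j \<subseteq> YS j"
proof (rule sp_sub[OF YS_subsp], simp, intro allI impI)
  fix c assume "j \<le> k+1" "c < j"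
  thus "q (c+1) \<in> YS j" using q_YS[of "c+1"] sp_mono[of "c+1" j "\<lambda>c. Y (c+1)" N] Ycar by auto
qed

lemma QU: assumes j: "j \<le> k+1" shows "Qmat q N j * Umat u j = gmat N (\<lambda>c. Y (c+1)) j"
proof (rule eq_matI)
  fix r c assume r: "r < dim_row (gmat N (\<lambda>c. Y (c+1)) j)" and c: "c < dim_col (gmat N (\<lambda>c. Y (c+1)) j)"
  hence r: "r < N" and c: "c < j" using gmat_carrier by (auto simp: gmat_def)
  have "(Qmat q N j * Umat u j) $$ (r,c) = (\<Sum>m<j. q (m+1) $ r * Umat u j $$ (m,c))"
    using r c unfolding Qmat_def by (simp add: scalar_prod_def lessThan_atLeast0 col_def)
  also have "\<dots> = (\<Sum>m<j. (if m = c then q (c+1) $ r else 0) + (if m + 1 = c then u c (c+1) * q c $ r else 0))"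
    using c by (intro sum.cong) (auto simp: Umat_idx)
  also have "\<dots> = q (c+1) $ r + (if c \<ge> 1 then u c (c+1) * q c $ r else 0)"
  proof -
    have "(\<Sum>m<j. (if m + 1 = c then u c (c+1) * q c $ r else 0)) = (if c \<ge> 1 then u c (c+1) * q c $ r else 0)"
    proof (cases "c \<ge> 1")
      case True
      have "(\<Sum>m<j. (if m + 1 = c then u c (c+1) * q c $ r else 0)) = (\<Sum>m<j. (if m = c - 1 then u c (c+1) * q c $ r else 0))"
        using True by (intro sum.cong) auto
      thus ?thesis using True c by simp
    qed simp
    thus ?thesis using c by (simp add: sum.distrib)
  qed
  also have "\<dots> = Y (c+1) $ r" unfolding Y_def using carr(1)[of "c+1"] carr(1)[of c] c j r arn0
    by (cases "c = 0") auto
  finally show "(Qmat q N j * Umat u j) $$ (r,c) = gmat N (\<lambda>c. Y (c+1)) j $$ (r,c)"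
    using r c unfolding gmat_def by simp
qed (auto simp: Qmat_def gmat_def)

lemma qq: assumes "a \<le> k+1" "1 \<le> m" "m \<le> k+1" shows "q a \<bullet>c q m = (if a = m then 1 else 0)"
proof (cases "a = 0")
  case True thus ?thesis using arn0(1) ip_zero(1)[OF carr(1)[of m]] assms by simp
next
  case False thus ?thesis using orthonormal[of a m] assms by simp
qed

lemma TY: assumes c: "c < k" and m: "1 \<le> m" "m \<le> k"
  shows "(D *\<^sub>v Y (c+1)) \<bullet>c q m = Tmat c1 c2 u l k $$ (m-1, c)"
proof -
  have c1': "1 \<le> c+1" "c+1 \<le> k" using c by auto
  have Yc: "Y (c+1) \<in> carrier_vec N" using Ycar c by simp
  have qc: "q (c+1) \<in> carrier_vec N" "q c \<in> carrier_vec N" "q (c+2) \<in> carrier_vec N" "q m \<in> carrier_vec N"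
    using carr(1) c m by auto
  have e: "(D *\<^sub>v Y (c+1)) $ r = (complex_of_real c1 + complex_of_real c2 * l (c+1) (c+1)) * q (c+1) $ r
      + (complex_of_real c1 * u c (c+1)) * q c $ r + (complex_of_real c2 * l (c+2) (c+1)) * q (c+2) $ r"
    if r: "r < N" for r
  proof -
    have "(D *\<^sub>v Y (c+1)) $ r = complex_of_real c1 * Y (c+1) $ r + complex_of_real c2 * (V *\<^sub>v Y (c+1)) $ r"
      unfolding Dmv[OF Yc] using r Yc V by simp
    also have "(V *\<^sub>v Y (c+1)) $ r = l (c+1) (c+1) * q (c+1) $ r + l (c+2) (c+1) * q (c+2) $ r"
      unfolding rel[OF c1'] using r qc by simp
    also have "Y (c+1) $ r = q (c+1) $ r + u c (c+1) * q c $ r" unfolding Y_def using r qc by simp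
    finally show ?thesis by (simp add: algebra_simps)
  qed
  have "(D *\<^sub>v Y (c+1)) \<bullet>c q m = (complex_of_real c1 + complex_of_real c2 * l (c+1) (c+1)) * (q (c+1) \<bullet>c q m)
      + (complex_of_real c1 * u c (c+1)) * (q c \<bullet>c q m) + (complex_of_real c2 * l (c+2) (c+1)) * (q (c+2) \<bullet>c q m)"
    by (rule ip_lin3[OF _ qc(4) e]) (use Dcar Yc in simp)
  also have "\<dots> = (complex_of_real c1 + complex_of_real c2 * l (c+1) (c+1)) * (if c+1 = m then 1 else 0)
      + (complex_of_real c1 * u c (c+1)) * (if c = m then 1 else 0) + (complex_of_real c2 * l (c+2) (c+1)) * (if c+2 = m then 1 else 0)"
    using qq[of "c+1" m] qq[of c m] qq[of "c+2" m] c m by simp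
  also have "\<dots> = Tmat c1 c2 u l k $$ (m-1, c)"
  proof -
    have "m - 1 < k" using m by simp
    note T = Tmat_idx[OF this c, of c1 c2 u l]
    show ?thesis unfolding T using c m by (auto simp: algebra_simps)
  qed
  finally show ?thesis .
qed

lemma resid: assumes z: "z \<in> carrier_vec k" and m: "1 \<le> m" "m \<le> k"
  shows "(D *\<^sub>v (gmat N (\<lambda>c. Y (c+1)) k *\<^sub>v z)) \<bullet>c q m = (Tmat c1 c2 u l k *\<^sub>v z) $ (m-1)"
proof -
  have Yc: "\<forall>c<k. Y (c+1) \<in> carrier_vec N" using Ycar by auto
  have qm: "q m \<in> carrier_vec N" using carr(1) m by simp
  have "D *\<^sub>v (gmat N (\<lambda>c. Y (c+1)) k *\<^sub>v z) = (D * gmat N (\<lambda>c. Y (c+1)) k) *\<^sub>v z"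
    using assoc_mult_mat_vec[OF Dcar gmat_carrier z] by simp
  also have "\<dots> = gmat N (\<lambda>c. D *\<^sub>v Y (c+1)) k *\<^sub>v z" using gmat_mult[OF Dcar Yc] by simp
  finally have "(D *\<^sub>v (gmat N (\<lambda>c. Y (c+1)) k *\<^sub>v z)) \<bullet>c q m = (\<Sum>c<k. z $ c * ((D *\<^sub>v Y (c+1)) \<bullet>c q m))"
    using gmat_ip[OF z qm] by simp
  also have "\<dots> = (\<Sum>c<k. Tmat c1 c2 u l k $$ (m-1, c) * z $ c)"
    using TY m by (intro sum.cong) auto
  also have "\<dots> = (Tmat c1 c2 u l k *\<^sub>v z) $ (m-1)"
    using mv_idx[OF Tmat_carrier z, of "m-1"] m by simp
  finally show ?thesis .
qed

end



lemma minv_prop: fixes A :: "complex mat" assumes A: "A \<in> carrier_mat n n" and d: "det A \<noteq> 0"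
  shows "A * minv A = 1\<^sub>m n" "minv A * A = 1\<^sub>m n" "minv A \<in> carrier_mat n n"
proof -
  have U: "A \<in> Units (ring_mat TYPE(complex) n ())" by (rule det_non_zero_imp_unit[OF A d])
  have "mat_inverse A \<noteq> None" using mat_inverse(1)[OF A, where b="()"] U by auto
  then obtain B where B: "mat_inverse A = Some B" by (cases "mat_inverse A") auto
  have "minv A = B" unfolding minv_def B by simp
  thus "A * minv A = 1\<^sub>m n" "minv A * A = 1\<^sub>m n" "minv A \<in> carrier_mat n n"
    using mat_inverse(2)[OF A B] by auto
qed

lemma minv_solve: fixes A :: "complex mat" assumes A: "A \<in> carrier_mat n n" and d: "det A \<noteq> 0"
  and y: "y \<in> carrier_vec n"
  shows "A *\<^sub>v (minv A *\<^sub>v y) = y" "minv A *\<^sub>v y \<in> carrier_vec n"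
    "\<And>x. x \<in> carrier_vec n \<Longrightarrow> A *\<^sub>v x = y \<Longrightarrow> x = minv A *\<^sub>v y"
proof -
  note M = minv_prop[OF A d]
  show "A *\<^sub>v (minv A *\<^sub>v y) = y" using assoc_mult_mat_vec[OF A M(3) y, symmetric] M(1) y by simp
  show "minv A *\<^sub>v y \<in> carrier_vec n" using M(3) y by simp
  fix x assume x: "x \<in> carrier_vec n" "A *\<^sub>v x = y"
  have "minv A *\<^sub>v y = (minv A * A) *\<^sub>v x" using assoc_mult_mat_vec[OF M(3) A x(1)] x(2) by simp
  thus "x = minv A *\<^sub>v y" using M(2) x by simp
qed

lemma lead_sub_carrier[simp]: "lead_sub A j \<in> carrier_mat j j" unfolding lead_sub_def by (rule mat_carrier)
lemma lead_sub_idx[simp]: "r < j \<Longrightarrow> c < j \<Longrightarrow> lead_sub A j $$ (r,c) = A $$ (r,c)"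
  unfolding lead_sub_def by simp
lemma lead_sub_dim[simp]: "dim_row (lead_sub A j) = j" "dim_col (lead_sub A j) = j"
  unfolding lead_sub_def by simp_all

locale LU =
  fixes k :: nat and T Lt Ut :: "complex mat"
  assumes car: "Lt \<in> carrier_mat k k" "Ut \<in> carrier_mat k k"
    and Lup: "\<forall>i<k. \<forall>j<k. i < j \<longrightarrow> Lt $$ (i,j) = 0" and Ldiag: "\<forall>i<k. Lt $$ (i,i) \<noteq> 0"
    and Ulow: "\<forall>i<k. \<forall>j<i. Ut $$ (i,j) = 0" and Udiag: "\<forall>i<k. Ut $$ (i,i) = 1"
    and TLU: "T = Lt * Ut"
    and tri: "\<And>i j. i < k \<Longrightarrow> j < k \<Longrightarrow> (j > i + 1 \<or> i > j + 1) \<Longrightarrow> T $$ (i,j) = 0"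
begin

lemma trsum: assumes "r < j" "c < j" "j \<le> k"
  shows "(\<Sum>p<j. Lt $$ (r,p) * Ut $$ (p,c)) = (\<Sum>p\<in>{..min r c}. Lt $$ (r,p) * Ut $$ (p,c))"
proof (rule sum.mono_neutral_right)
  show "{..min r c} \<subseteq> {..<j}" using assms by auto
  show "\<forall>p\<in>{..<j} - {..min r c}. Lt $$ (r,p) * Ut $$ (p,c) = 0"
  proof
    fix p assume p: "p \<in> {..<j} - {..min r c}"
    hence "r < p \<or> c < p" by auto
    thus "Lt $$ (r,p) * Ut $$ (p,c) = 0" using Lup Ulow assms p by auto
  qed
qed simp

lemma Tent: assumes "r < k" "c < k" shows "T $$ (r,c) = (\<Sum>p\<in>{..min r c}. Lt $$ (r,p) * Ut $$ (p,c))"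
proof -
  have "T $$ (r,c) = (\<Sum>p<k. Lt $$ (r,p) * Ut $$ (p,c))"
    unfolding TLU using car assms by (simp add: scalar_prod_def lessThan_atLeast0)
  thus ?thesis using trsum[OF assms order_refl] by simp
qed

lemma sum_split_top: "(\<Sum>p\<in>{..m}. f p) = f m + (\<Sum>p<m. f p)" for f :: "nat \<Rightarrow> complex"
  by (simp add: lessThan_Suc_atMost[symmetric])

lemma Lt_band: "i < k \<Longrightarrow> m + 1 < i \<Longrightarrow> Lt $$ (i,m) = 0"
proof (induction m rule: nat_less_induct)
  case (1 m)
  have "T $$ (i,m) = 0" using tri[of i m] 1 by auto
  moreover have "T $$ (i,m) = Lt $$ (i,m) * Ut $$ (m,m) + (\<Sum>p<m. Lt $$ (i,p) * Ut $$ (p,m))"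
    using Tent[of i m] 1 sum_split_top by (simp add: min_def)
  moreover have "(\<Sum>p<m. Lt $$ (i,p) * Ut $$ (p,m)) = 0" using 1 by (intro sum.neutral) auto
  ultimately show ?case using Udiag 1 by simp
qed

lemma Ut_band: "i < k \<Longrightarrow> m + 1 < i \<Longrightarrow> Ut $$ (m,i) = 0"
proof (induction m rule: nat_less_induct)
  case (1 m)
  have "T $$ (m,i) = 0" using tri[of m i] 1 by auto
  moreover have "T $$ (m,i) = Lt $$ (m,m) * Ut $$ (m,i) + (\<Sum>p<m. Lt $$ (m,p) * Ut $$ (p,i))"
    using Tent[of m i] 1 sum_split_top by (simp add: min_def)
  moreover have "(\<Sum>p<m. Lt $$ (m,p) * Ut $$ (p,i)) = 0" using 1 by (intro sum.neutral) auto
  ultimately show ?case using Ldiag 1 by simp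
qed

lemma T00: "0 < k \<Longrightarrow> T $$ (0,0) = Lt $$ (0,0)"
  using Tent[of 0 0] Udiag by simp

lemma Tsub: assumes "1 \<le> i" "i < k" shows "T $$ (i,i-1) = Lt $$ (i,i-1)"
proof -
  have mm: "min i (i-1) = i-1" by simp
  have "T $$ (i,i-1) = Lt $$ (i,i-1) * Ut $$ (i-1,i-1) + (\<Sum>p<i-1. Lt $$ (i,p) * Ut $$ (p,i-1))"
    using Tent[of i "i-1", unfolded mm] assms sum_split_top by simp
  moreover have "(\<Sum>p<i-1. Lt $$ (i,p) * Ut $$ (p,i-1)) = 0" using assms Lt_band by (intro sum.neutral) auto
  ultimately show ?thesis using Udiag assms by simp
qed

lemma Tsup: assumes "1 \<le> i" "i < k" shows "T $$ (i-1,i) = Lt $$ (i-1,i-1) * Ut $$ (i-1,i)"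
proof -
  have mm: "min (i-1) i = i-1" by simp
  have "T $$ (i-1,i) = Lt $$ (i-1,i-1) * Ut $$ (i-1,i) + (\<Sum>p<i-1. Lt $$ (i-1,p) * Ut $$ (p,i))"
    using Tent[of "i-1" i, unfolded mm] assms sum_split_top by simp
  moreover have "(\<Sum>p<i-1. Lt $$ (i-1,p) * Ut $$ (p,i)) = 0" using assms Ut_band by (intro sum.neutral) auto
  ultimately show ?thesis by simp
qed

lemma Tdiag: assumes "1 \<le> i" "i < k" shows "T $$ (i,i) = Lt $$ (i,i-1) * Ut $$ (i-1,i) + Lt $$ (i,i)"
proof -
  have "T $$ (i,i) = Lt $$ (i,i) * Ut $$ (i,i) + (\<Sum>p<i. Lt $$ (i,p) * Ut $$ (p,i))"
    using Tent[of i i] assms sum_split_top by simp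
  also have "(\<Sum>p<i. Lt $$ (i,p) * Ut $$ (p,i)) = Lt $$ (i,i-1) * Ut $$ (i-1,i) + (\<Sum>p<i-1. Lt $$ (i,p) * Ut $$ (p,i))"
    using sum_split_top[of "\<lambda>p. Lt $$ (i,p) * Ut $$ (p,i)" "i-1"] assms
    by (simp add: lessThan_Suc_atMost[symmetric])
  also have "(\<Sum>p<i-1. Lt $$ (i,p) * Ut $$ (p,i)) = 0" using assms Lt_band by (intro sum.neutral) auto
  finally show ?thesis using Udiag assms by simp
qed

lemma lead_LU: assumes j: "j \<le> k" shows "lead_sub T j = lead_sub Lt j * lead_sub Ut j"
proof (rule eq_matI)
  fix r c assume "r < dim_row (lead_sub Lt j * lead_sub Ut j)" "c < dim_col (lead_sub Lt j * lead_sub Ut j)"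
  hence rc: "r < j" "c < j" by auto
  have "(lead_sub Lt j * lead_sub Ut j) $$ (r,c) = (\<Sum>p<j. Lt $$ (r,p) * Ut $$ (p,c))"
    using rc by (simp add: scalar_prod_def lessThan_atLeast0 col_def row_def)
  also have "\<dots> = T $$ (r,c)" using trsum[OF rc j] Tent[of r c] rc j by simp
  finally show "lead_sub T j $$ (r,c) = (lead_sub Lt j * lead_sub Ut j) $$ (r,c)" using rc by simp
qed auto

lemma det_U: assumes "j \<le> k" shows "det (lead_sub Ut j) = 1"
proof -
  have "upper_triangular (lead_sub Ut j)" unfolding upper_triangular_def using Ulow assms by auto
  hence "det (lead_sub Ut j) = prod_list (diag_mat (lead_sub Ut j))" by (rule det_upper_triangular[OF _ lead_sub_carrier])
  also have "\<dots> = (\<Prod>i = 0..<j. lead_sub Ut j $$ (i,i))" by (simp add: prod_list_diag_prod)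
  also have "\<dots> = 1" using Udiag assms by (intro prod.neutral) auto
  finally show ?thesis .
qed

lemma det_L: assumes "j \<le> k" shows "det (lead_sub Lt j) \<noteq> 0"
proof -
  have "det (lead_sub Lt j) = prod_list (diag_mat (lead_sub Lt j))"
    by (rule det_lower_triangular[OF _ lead_sub_carrier]) (use Lup assms in auto)
  also have "\<dots> = (\<Prod>i = 0..<j. lead_sub Lt j $$ (i,i))" by (simp add: prod_list_diag_prod)
  finally show ?thesis using Ldiag assms by simp
qed

lemma det_T: assumes "j \<le> k" shows "det (lead_sub T j) \<noteq> 0"
  unfolding lead_LU[OF assms] det_mult[OF lead_sub_carrier lead_sub_carrier] using det_U[OF assms] det_L[OF assms] by simp

end



lemma Tmat_idx2: "r < j \<Longrightarrow> c < j \<Longrightarrow> Tmat c1 c2 u l j $$ (r,c) = complex_of_real c1 * Umat u j $$ (r,c) + complex_of_real c2 * Lmat l j $$ (r,c)"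
  unfolding Tmat_def by simp

locale mainL = arnD V N k b q v u l D c1 c2 + LU k "Tmat c1 c2 u l k" Lt Ut
  for V :: "complex mat" and N k :: nat and b :: "complex vec" and q v :: "nat \<Rightarrow> complex vec"
    and u l :: "nat \<Rightarrow> nat \<Rightarrow> complex" and D :: "complex mat" and c1 c2 :: real and Lt Ut :: "complex mat" +
  fixes w x :: "nat \<Rightarrow> complex vec" and alpha beta gamma :: "nat \<Rightarrow> complex"
  assumes k1: "1 \<le> k"
    and beta: "\<And>j. beta j = - complex_of_real c2 * l (j+1) j"
    and gamma: "\<And>j. gamma j = - complex_of_real c1 * u j (j+1)"
    and alpha: "alpha 1 = complex_of_real (vnorm b) / Lt $$ (0,0)"
      "\<forall>j\<in>{2..k}. alpha j = beta (j-1) * alpha (j-1) / Lt $$ (j-1,j-1)"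
    and w: "w 1 = q 1"
      "\<forall>j\<in>{2..k}. w j = q j + u (j-1) j \<cdot>\<^sub>v q (j-1)
                          + (gamma (j-1) / Lt $$ (j-2,j-2)) \<cdot>\<^sub>v w (j-1)"
    and x: "x 0 = 0\<^sub>v N" "\<forall>j\<in>{1..k}. x j = x (j-1) + alpha j \<cdot>\<^sub>v w j"
begin

abbreviation TT where "TT \<equiv> Tmat c1 c2 u l k"
abbreviation Ub where "Ub j \<equiv> lead_sub Ut j"
abbreviation Lb where "Lb j \<equiv> lead_sub Lt j"
abbreviation Yf where "Yf \<equiv> (\<lambda>c. Y (c+1))"
definition G where "G j = minv (Ub j) *\<^sub>v unit_vec j (j-1)"
definition av where "av j = vec j (\<lambda>i. alpha (i+1))"
abbreviation nb where "nb \<equiv> complex_of_real (vnorm b)"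

lemma part1: "Lt $$ (0,0) = complex_of_real c1 + complex_of_real c2 * l 1 1"
  using T00 k1 Tmat_idx[of 0 k 0 c1 c2 u l] by simp

lemma Tcoef: assumes "1 \<le> i" "i < k"
  shows "Lt $$ (i,i-1) = complex_of_real c2 * l (i+1) i"
    "Ut $$ (i-1,i) = complex_of_real c1 * u i (i+1) / Lt $$ (i-1,i-1)"
    "Lt $$ (i,i) = complex_of_real c1 + complex_of_real c2 * l (i+1) (i+1) - Lt $$ (i,i-1) * Ut $$ (i-1,i)"
proof -
  have a: "i - 1 < k" using assms by simp
  have ar[simp]: "i \<noteq> i - 1" "i - 1 \<noteq> i + 1" "i - 1 + 1 = i" "i \<noteq> i - Suc 0" "i - Suc 0 \<noteq> Suc i" "i - Suc 0 \<noteq> i" using assms by auto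
  show "Lt $$ (i,i-1) = complex_of_real c2 * l (i+1) i"
    using Tsub[OF assms] Tmat_idx[OF assms(2) a, of c1 c2 u l] assms by simp
  have "Lt $$ (i-1,i-1) \<noteq> 0" using Ldiag a by simp
  thus "Ut $$ (i-1,i) = complex_of_real c1 * u i (i+1) / Lt $$ (i-1,i-1)"
    using Tsup[OF assms] Tmat_idx[OF a assms(2), of c1 c2 u l] assms by (simp add: field_simps)
  show "Lt $$ (i,i) = complex_of_real c1 + complex_of_real c2 * l (i+1) (i+1) - Lt $$ (i,i-1) * Ut $$ (i-1,i)"
    using Tdiag[OF assms] Tmat_idx[OF assms(2) assms(2), of c1 c2 u l] by simp
qed

lemma part2: "\<forall>j\<in>{2..k}. Lt $$ (j-1,j-1) = complex_of_real c1 + complex_of_real c2 * l j j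
                                    - beta (j-1) * gamma (j-1) / Lt $$ (j-2,j-2)"
proof
  fix j assume j: "j \<in> {2..k}"
  hence i: "1 \<le> j - 1" "j - 1 < k" by auto
  have e: "j - 1 + 1 = j" "j - 1 - 1 = j - 2" using j by auto
  note C = Tcoef[OF i, unfolded e]
  show "Lt $$ (j-1,j-1) = complex_of_real c1 + complex_of_real c2 * l j j - beta (j-1) * gamma (j-1) / Lt $$ (j-2,j-2)"
    unfolding C(3) C(1) C(2) beta gamma e by simp
qed

lemma Ub_mv: assumes "y \<in> carrier_vec j" "r < j" "j \<le> k"
  shows "(Ub j *\<^sub>v y) $ r = (\<Sum>c<j. Ut $$ (r,c) * y $ c)"
proof -
  have "(Ub j *\<^sub>v y) $ r = (\<Sum>c<j. Ub j $$ (r,c) * y $ c)" by (rule mv_idx[OF lead_sub_carrier assms(1,2)])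
  also have "\<dots> = (\<Sum>c<j. Ut $$ (r,c) * y $ c)" using assms by (intro sum.cong) auto
  finally show ?thesis .
qed

lemma Lb_mv: assumes "y \<in> carrier_vec j" "r < j" "j \<le> k"
  shows "(Lb j *\<^sub>v y) $ r = (\<Sum>c<j. Lt $$ (r,c) * y $ c)"
proof -
  have "(Lb j *\<^sub>v y) $ r = (\<Sum>c<j. Lb j $$ (r,c) * y $ c)" by (rule mv_idx[OF lead_sub_carrier assms(1,2)])
  also have "\<dots> = (\<Sum>c<j. Lt $$ (r,c) * y $ c)" using assms by (intro sum.cong) auto
  finally show ?thesis .
qed

lemma Ub_det: "j \<le> k \<Longrightarrow> det (Ub j) \<noteq> 0" using det_U by simp

lemma G_prop: assumes "j \<le> k" shows "G j \<in> carrier_vec j" "Ub j *\<^sub>v G j = unit_vec j (j-1)"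
proof -
  note M = minv_solve[OF lead_sub_carrier Ub_det[OF assms] unit_vec_carrier[of j "j-1"]]
  show "G j \<in> carrier_vec j" unfolding G_def by (rule M(2))
  show "Ub j *\<^sub>v G j = unit_vec j (j-1)" unfolding G_def by (rule M(1))
qed

lemma G_uniq: assumes "j \<le> k" "g \<in> carrier_vec j" "Ub j *\<^sub>v g = unit_vec j (j-1)" shows "G j = g"
proof -
  note M = minv_solve[OF lead_sub_carrier Ub_det[OF assms(1)] unit_vec_carrier[of j "j-1"]]
  show ?thesis unfolding G_def using M(3)[OF assms(2,3)] by simp
qed

lemma wG: "1 \<le> j \<Longrightarrow> j \<le> k \<Longrightarrow> w j = gmat N Yf j *\<^sub>v G j"
proof (induction j)
  case 0 thus ?case by simp
next
  case (Suc j)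
  show ?case
  proof (cases "j = 0")
    case True
    have "Ub 1 *\<^sub>v unit_vec 1 0 = unit_vec 1 0"
    proof (rule eq_vecI)
      fix r assume "r < dim_vec (unit_vec 1 0)"
      hence r: "r < 1" by simp
      show "(Ub 1 *\<^sub>v unit_vec 1 0) $ r = unit_vec 1 0 $ r"
        using Ub_mv[OF unit_vec_carrier r k1] r Udiag k1 by simp
    qed simp
    hence "G 1 = unit_vec 1 0" using G_uniq[of 1 "unit_vec 1 0"] k1 by simp
    moreover have "gmat N Yf 1 *\<^sub>v unit_vec 1 0 = q 1"
      using Ycar[of 1] carr(1)[of 1] arn0 by (intro eq_vecI) (auto simp: gmat_mv Y_def)
    ultimately show ?thesis using True w(1) by simp
  next
    case False
    hence j: "1 \<le> j" "j < k" using Suc.prems by auto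
    have IH: "w j = gmat N Yf j *\<^sub>v G j" using Suc j by simp
    define s where "s = Ut $$ (j-1,j)"
    have s: "s = - (gamma j / Lt $$ (j-1,j-1))" unfolding s_def Tcoef(2)[OF j] gamma by simp
    note Gj = G_prop[of j]
    define g where "g = vec (Suc j) (\<lambda>i. if i = j then 1 else - s * G j $ i)"
    have gc: "g \<in> carrier_vec (Suc j)" unfolding g_def by simp
    have Ug: "Ub (Suc j) *\<^sub>v g = unit_vec (Suc j) j"
    proof (rule eq_vecI)
      fix r assume "r < dim_vec (unit_vec (Suc j) j)"
      hence r: "r < Suc j" by simp
      have "(Ub (Suc j) *\<^sub>v g) $ r = (\<Sum>c<Suc j. Ut $$ (r,c) * g $ c)" using Ub_mv[OF gc r] j by simp
      also have "\<dots> = Ut $$ (r,j) + (\<Sum>c<j. Ut $$ (r,c) * (- s * G j $ c))"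
        unfolding g_def by simp
      also have "(\<Sum>c<j. Ut $$ (r,c) * (- s * G j $ c)) = - s * (\<Sum>c<j. Ut $$ (r,c) * G j $ c)"
        by (simp add: sum_distrib_left algebra_simps)
      finally have e: "(Ub (Suc j) *\<^sub>v g) $ r = Ut $$ (r,j) - s * (\<Sum>c<j. Ut $$ (r,c) * G j $ c)" by simp
      show "(Ub (Suc j) *\<^sub>v g) $ r = unit_vec (Suc j) j $ r"
      proof (cases "r = j")
        case True
        have "(\<Sum>c<j. Ut $$ (r,c) * G j $ c) = 0" using Ulow True j by (intro sum.neutral) auto
        thus ?thesis using e True Udiag j by simp
      next
        case False
        hence rj: "r < j" using r by simp
        have "(\<Sum>c<j. Ut $$ (r,c) * G j $ c) = (Ub j *\<^sub>v G j) $ r" using Ub_mv[OF Gj(1) rj] j by simp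
        also have "\<dots> = (if r = j - 1 then 1 else 0)" using Gj(2) rj j by simp
        finally have "(\<Sum>c<j. Ut $$ (r,c) * G j $ c) = (if r = j - 1 then 1 else 0)" .
        moreover have "Ut $$ (r,j) = (if r = j - 1 then s else 0)"
          using Ulow Ut_band[of j r] rj j unfolding s_def by auto
        ultimately show ?thesis using e False r by simp
      qed
    qed simp
    have GS: "G (Suc j) = g" using G_uniq[of "Suc j" g] gc Ug j by simp
    have Yc: "Y (Suc j) \<in> carrier_vec N" using Ycar[of "Suc j"] j by simp
    have "gmat N Yf (Suc j) *\<^sub>v g = gmat N Yf j *\<^sub>v vec j (\<lambda>i. g $ i) + g $ j \<cdot>\<^sub>v Y (Suc j)"
      using gmat_Suc[OF gc, of Yf N] Yc by simp
    also have "vec j (\<lambda>i. g $ i) = (- s) \<cdot>\<^sub>v G j" unfolding g_def using Gj j by (intro eq_vecI) auto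
    also have "gmat N Yf j *\<^sub>v ((- s) \<cdot>\<^sub>v G j) = (- s) \<cdot>\<^sub>v w j"
      unfolding IH using mult_mat_vec[OF gmat_carrier Gj(1)] j by simp
    finally have "gmat N Yf (Suc j) *\<^sub>v G (Suc j) = (- s) \<cdot>\<^sub>v w j + Y (Suc j)" unfolding GS g_def by simp
    moreover have "w (Suc j) = Y (Suc j) + (- s) \<cdot>\<^sub>v w j"
    proof -
      have "Suc j \<in> {2..k}" using j by auto
      from w(2)[rule_format, OF this] show ?thesis unfolding Y_def s using j by (simp add: numeral_2_eq_2)
    qed
    moreover have "w j \<in> carrier_vec N" using IH by simp
    moreover have "Y (Suc j) + (- s) \<cdot>\<^sub>v w j = (- s) \<cdot>\<^sub>v w j + Y (Suc j)"
      using Yc \<open>w j \<in> carrier_vec N\<close> by (intro eq_vecI) auto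
    ultimately show ?thesis by simp
  qed
qed

lemma part3: "\<forall>j\<in>{1..k}. w j = (Qmat q N j * Umat u j * minv (lead_sub Ut j)) *\<^sub>v unit_vec j (j-1)"
proof
  fix j assume j: "j \<in> {1..k}"
  have M: "minv (Ub j) \<in> carrier_mat j j" using minv_prop(3)[OF lead_sub_carrier Ub_det] j by auto
  have QUc: "Qmat q N j * Umat u j \<in> carrier_mat N j" by (rule mult_carrier_mat[of _ N j]) (auto simp: Qmat_def)
  have "(Qmat q N j * Umat u j * minv (Ub j)) *\<^sub>v unit_vec j (j-1) = (Qmat q N j * Umat u j) *\<^sub>v G j"
    unfolding G_def using assoc_mult_mat_vec[OF QUc M unit_vec_carrier] by simp
  also have "\<dots> = w j" using QU[of j] wG[of j] j by simp
  finally show "w j = (Qmat q N j * Umat u j * minv (lead_sub Ut j)) *\<^sub>v unit_vec j (j-1)" by simp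
qed

lemma Tmat_dim: "dim_row (Tmat c1 c2 u l j) = j" "dim_col (Tmat c1 c2 u l j) = j"
  unfolding Tmat_def by simp_all

lemma Tj: assumes "j \<le> k" shows "Tmat c1 c2 u l j = lead_sub TT j"
proof (rule eq_matI)
  fix r c assume "r < dim_row (lead_sub TT j)" "c < dim_col (lead_sub TT j)"
  hence rc: "r < j" "c < j" by auto
  have rc': "r < k" "c < k" using rc assms by auto
  show "Tmat c1 c2 u l j $$ (r, c) = lead_sub TT j $$ (r, c)"
    unfolding Tmat_idx[OF rc] lead_sub_idx[OF rc] Tmat_idx[OF rc'] ..
qed (auto simp: Tmat_dim)

lemma Tj_LU: assumes "j \<le> k" shows "Tmat c1 c2 u l j = Lb j * Ub j"
proof -
  have "Tmat c1 c2 u l j = lead_sub TT j" by (rule Tj[OF assms])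
  also have "\<dots> = Lb j * Ub j" by (rule lead_LU[OF assms])
  finally show ?thesis .
qed

lemma Tj_det: assumes "j \<le> k" shows "det (Tmat c1 c2 u l j) \<noteq> 0"
proof -
  show ?thesis unfolding Tj[OF assms] by (rule det_T[OF assms])
qed

lemma av_car[simp]: "av j \<in> carrier_vec j" unfolding av_def by simp

lemma Lb_av: assumes j: "j \<le> k" shows "Lb j *\<^sub>v av j = nb \<cdot>\<^sub>v unit_vec j 0"
proof (rule eq_vecI)
  fix r assume "r < dim_vec (nb \<cdot>\<^sub>v unit_vec j 0)"
  hence r: "r < j" by simp
  have "(Lb j *\<^sub>v av j) $ r = (\<Sum>c<j. Lt $$ (r,c) * av j $ c)" by (rule Lb_mv[OF av_car r j])
  also have "\<dots> = (\<Sum>c<j. Lt $$ (r,c) * alpha (c+1))" unfolding av_def by (intro sum.cong) auto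
  also have "\<dots> = (\<Sum>c<j. (if c = r then Lt $$ (r,r) * alpha (r+1) else 0) + (if c + 1 = r then Lt $$ (r,c) * alpha (c+1) else 0))"
  proof (intro sum.cong refl)
    fix c assume "c \<in> {..<j}"
    hence c: "c < j" by simp
    show "Lt $$ (r,c) * alpha (c+1) = (if c = r then Lt $$ (r,r) * alpha (r+1) else 0) + (if c + 1 = r then Lt $$ (r,c) * alpha (c+1) else 0)"
    proof -
      have z1: "Lt $$ (r,c) = 0" if "r < c" using Lup[rule_format, of r c] that c r j by simp
      have z2: "Lt $$ (r,c) = 0" if "c + 1 < r" using Lt_band[of r c] that c r j by simp
      consider "c = r" | "c + 1 = r" | "r < c" | "c + 1 < r" by linarith
      thus ?thesis
      proof cases
        case 1 thus ?thesis by simp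
      next
        case 2 thus ?thesis by simp
      next
        case 3 thus ?thesis using z1 by simp
      next
        case 4 thus ?thesis using z2 by simp
      qed
    qed
  qed
  also have "\<dots> = Lt $$ (r,r) * alpha (r+1) + (if r \<ge> 1 then Lt $$ (r,r-1) * alpha r else 0)"
  proof -
    have "(\<Sum>c<j. (if c + 1 = r then Lt $$ (r,c) * alpha (c+1) else 0)) = (if r \<ge> 1 then Lt $$ (r,r-1) * alpha r else 0)"
    proof (cases "r \<ge> 1")
      case True
      have "(\<Sum>c<j. (if c + 1 = r then Lt $$ (r,c) * alpha (c+1) else 0)) = (\<Sum>c<j. (if c = r - 1 then Lt $$ (r,r-1) * alpha r else 0))"
        using True by (intro sum.cong) auto
      thus ?thesis using True r by simp
    qed simp
    thus ?thesis using r by (simp add: sum.distrib)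
  qed
  also have "\<dots> = (nb \<cdot>\<^sub>v unit_vec j 0) $ r"
  proof (cases "r = 0")
    case True thus ?thesis using alpha(1) Ldiag r j by simp
  next
    case False
    hence i: "1 \<le> r" "r < k" using r j by auto
    have "r + 1 \<in> {2..k}" using i by auto
    from alpha(2)[rule_format, OF this] have ar: "alpha (r+1) = beta r * alpha r / Lt $$ (r,r)" by simp
    have "Lt $$ (r,r) \<noteq> 0" using Ldiag i by simp
    thus ?thesis unfolding ar using False r Tcoef(1)[OF i] beta[of r] by simp
  qed
  finally show "(Lb j *\<^sub>v av j) $ r = (nb \<cdot>\<^sub>v unit_vec j 0) $ r" .
qed simp

lemma A4: assumes j: "j \<le> k"
  shows "Ub j *\<^sub>v (minv (Tmat c1 c2 u l j) *\<^sub>v (nb \<cdot>\<^sub>v unit_vec j 0)) = av j"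
proof -
  define hh where "hh = minv (Tmat c1 c2 u l j) *\<^sub>v (nb \<cdot>\<^sub>v unit_vec j 0)"
  have ec: "nb \<cdot>\<^sub>v unit_vec j 0 \<in> carrier_vec j" by simp
  note MT = minv_solve[OF Tmat_carrier Tj_det[OF j] ec]
  have hc: "hh \<in> carrier_vec j" unfolding hh_def using MT(2) .
  have "Lb j *\<^sub>v (Ub j *\<^sub>v hh) = (Lb j * Ub j) *\<^sub>v hh"
    using assoc_mult_mat_vec[OF lead_sub_carrier lead_sub_carrier hc] by simp
  also have "\<dots> = nb \<cdot>\<^sub>v unit_vec j 0" unfolding Tj_LU[OF j, symmetric] hh_def using MT(1) .
  finally have e1: "Lb j *\<^sub>v (Ub j *\<^sub>v hh) = nb \<cdot>\<^sub>v unit_vec j 0" .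
  note LLs = minv_solve(3)[OF lead_sub_carrier det_L[OF j] ec]
  have "Ub j *\<^sub>v hh = minv (Lb j) *\<^sub>v (nb \<cdot>\<^sub>v unit_vec j 0)"
    using LLs[OF mult_mat_vec_carrier[OF lead_sub_carrier hc] e1] .
  moreover have "av j = minv (Lb j) *\<^sub>v (nb \<cdot>\<^sub>v unit_vec j 0)"
    using LLs[OF av_car Lb_av[OF j]] .
  ultimately show ?thesis unfolding hh_def by simp
qed

lemma part4: "\<forall>j\<in>{1..k}. alpha j = nb * minv (Tmat c1 c2 u l j) $$ (j-1, 0)"
proof
  fix j assume "j \<in> {1..k}"
  hence j: "1 \<le> j" "j \<le> k" by auto
  define M where "M = minv (Tmat c1 c2 u l j)"
  have Mc: "M \<in> carrier_mat j j" unfolding M_def using minv_prop(3)[OF Tmat_carrier Tj_det[OF j(2)]] .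
  define hh where "hh = M *\<^sub>v (nb \<cdot>\<^sub>v unit_vec j 0)"
  have hc: "hh \<in> carrier_vec j" unfolding hh_def using Mc by simp
  have jj: "j - 1 < j" using j by simp
  have "(Ub j *\<^sub>v hh) $ (j-1) = (\<Sum>c<j. Ut $$ (j-1,c) * hh $ c)" using Ub_mv[OF hc jj j(2)] .
  also have "\<dots> = (\<Sum>c<j. if c = j - 1 then hh $ c else 0)"
  proof (intro sum.cong refl)
    fix c assume "c \<in> {..<j}"
    hence c: "c < j" by simp
    show "Ut $$ (j-1,c) * hh $ c = (if c = j - 1 then hh $ c else 0)"
    proof (cases "c = j - 1")
      case True thus ?thesis using Udiag[rule_format, of "j-1"] j by simp
    next
      case False
      hence "c < j - 1" using c by simp
      thus ?thesis using Ulow[rule_format, of "j-1" c] j False by simp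
    qed
  qed
  also have "\<dots> = hh $ (j-1)" using jj by simp
  finally have "hh $ (j-1) = alpha j" using A4[OF j(2)] j unfolding hh_def M_def av_def by simp
  moreover have "hh $ (j-1) = nb * M $$ (j-1,0)"
  proof -
    have "hh $ (j-1) = (\<Sum>c<j. M $$ (j-1,c) * (nb \<cdot>\<^sub>v unit_vec j 0) $ c)"
      unfolding hh_def by (rule mv_idx[OF Mc _ jj]) simp
    also have "\<dots> = (\<Sum>c<j. if c = 0 then nb * M $$ (j-1,0) else 0)"
      by (intro sum.cong) (auto simp: unit_vec_def)
    also have "\<dots> = nb * M $$ (j-1,0)" using j by simp
    finally show ?thesis .
  qed
  ultimately show "alpha j = nb * minv (Tmat c1 c2 u l j) $$ (j-1, 0)" unfolding M_def by simp
qed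

lemma gmat_dim: "dim_row (gmat n f j) = n" "dim_col (gmat n f j) = j"
  by (rule carrier_matD[OF gmat_carrier])+

definition Z where "Z j = minv (Ub j) *\<^sub>v av j"

lemma Z_prop: assumes "j \<le> k" shows "Z j \<in> carrier_vec j" "Ub j *\<^sub>v Z j = av j"
proof -
  note M = minv_solve[OF lead_sub_carrier Ub_det[OF assms] av_car[of j]]
  show "Z j \<in> carrier_vec j" unfolding Z_def by (rule M(2))
  show "Ub j *\<^sub>v Z j = av j" unfolding Z_def by (rule M(1))
qed

lemma Z_uniq: assumes "j \<le> k" "g \<in> carrier_vec j" "Ub j *\<^sub>v g = av j" shows "Z j = g"
proof -
  note M = minv_solve[OF lead_sub_carrier Ub_det[OF assms(1)] av_car[of j]]
  show ?thesis unfolding Z_def using M(3)[OF assms(2,3)] by simp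
qed

lemma XZ: "j \<le> k \<Longrightarrow> x j = gmat N Yf j *\<^sub>v Z j"
proof (induction j)
  case 0
  have "gmat N Yf 0 *\<^sub>v Z 0 = 0\<^sub>v N" using Z_prop(1)[of 0] by (intro eq_vecI) (auto simp: gmat_mv)
  thus ?case using x(1) by simp
next
  case (Suc j)
  hence j: "Suc j \<le> k" "j \<le> k" by auto
  have IH: "x j = gmat N Yf j *\<^sub>v Z j" using Suc j by simp
  note ZJ = Z_prop[OF j(2)]
  note GJ = G_prop[OF j(1)]
  define al where "al = alpha (Suc j)"
  define ext where "ext = vec (Suc j) (\<lambda>i. if i < j then Z j $ i else 0)"
  have extc: "ext \<in> carrier_vec (Suc j)" unfolding ext_def by simp
  define z' where "z' = ext + al \<cdot>\<^sub>v G (Suc j)"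
  have z'c: "z' \<in> carrier_vec (Suc j)" unfolding z'_def using extc GJ(1) by simp
  have Uext: "(Ub (Suc j) *\<^sub>v ext) $ r = (if r < j then alpha (r+1) else 0)" if r: "r < Suc j" for r
  proof -
    have "(Ub (Suc j) *\<^sub>v ext) $ r = (\<Sum>c<Suc j. Ut $$ (r,c) * ext $ c)" by (rule Ub_mv[OF extc r j(1)])
    also have "\<dots> = (\<Sum>c<j. Ut $$ (r,c) * Z j $ c)" unfolding ext_def by simp
    also have "\<dots> = (if r < j then alpha (r+1) else 0)"
    proof (cases "r < j")
      case True
      have "(\<Sum>c<j. Ut $$ (r,c) * Z j $ c) = (Ub j *\<^sub>v Z j) $ r" using Ub_mv[OF ZJ(1) True j(2)] by simp
      thus ?thesis using ZJ(2) True unfolding av_def by simp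
    next
      case False
      hence rj: "r = j" using r by simp
      have "(\<Sum>c<j. Ut $$ (r,c) * Z j $ c) = 0"
      proof (intro sum.neutral ballI)
        fix c assume "c \<in> {..<j}"
        thus "Ut $$ (r,c) * Z j $ c = 0" using Ulow[rule_format, of j c] rj j by simp
      qed
      thus ?thesis using False by simp
    qed
    finally show ?thesis .
  qed
  have Uz': "Ub (Suc j) *\<^sub>v z' = av (Suc j)"
  proof -
    have "Ub (Suc j) *\<^sub>v z' = Ub (Suc j) *\<^sub>v ext + al \<cdot>\<^sub>v (Ub (Suc j) *\<^sub>v G (Suc j))"
      unfolding z'_def using mult_add_distrib_mat_vec[OF lead_sub_carrier extc smult_carrier_vec[THEN iffD2, OF GJ(1)]]
        mult_mat_vec[OF lead_sub_carrier GJ(1)] by simp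
    also have "Ub (Suc j) *\<^sub>v G (Suc j) = unit_vec (Suc j) j" using GJ(2) by simp
    finally have e: "Ub (Suc j) *\<^sub>v z' = Ub (Suc j) *\<^sub>v ext + al \<cdot>\<^sub>v unit_vec (Suc j) j" .
    show ?thesis unfolding e
    proof (rule eq_vecI)
      fix r assume "r < dim_vec (av (Suc j))"
      hence r: "r < Suc j" by (simp add: av_def)
      show "(Ub (Suc j) *\<^sub>v ext + al \<cdot>\<^sub>v unit_vec (Suc j) j) $ r = av (Suc j) $ r"
      proof (cases "r < j")
        case True thus ?thesis using Uext[OF r] r extc unfolding av_def al_def by (auto simp: unit_vec_def)
      next
        case False
        hence "r = j" using r by simp
        thus ?thesis using Uext[OF r] r extc unfolding av_def al_def by (auto simp: unit_vec_def)
      qed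
    qed (simp add: av_def)
  qed
  have ZS: "Z (Suc j) = z'" by (rule Z_uniq[OF j(1) z'c Uz'])
  have Yc: "Y (Suc j) \<in> carrier_vec N" using Ycar[of "Suc j"] j by simp
  have "gmat N Yf (Suc j) *\<^sub>v ext = gmat N Yf j *\<^sub>v vec j (\<lambda>i. ext $ i) + ext $ j \<cdot>\<^sub>v Y (Suc j)"
    using gmat_Suc[OF extc, of Yf N] Yc by simp
  also have "vec j (\<lambda>i. ext $ i) = Z j" unfolding ext_def using ZJ(1) by (intro eq_vecI) auto
  also have "ext $ j = 0" unfolding ext_def by simp
  finally have ge0: "gmat N Yf (Suc j) *\<^sub>v ext = gmat N Yf j *\<^sub>v Z j + 0 \<cdot>\<^sub>v Y (Suc j)" .
  have gc: "gmat N Yf j *\<^sub>v Z j \<in> carrier_vec N" by simp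
  have "gmat N Yf j *\<^sub>v Z j + 0 \<cdot>\<^sub>v Y (Suc j) = gmat N Yf j *\<^sub>v Z j"
    using Yc gc by (intro eq_vecI) (auto simp: gmat_dim)
  hence ge: "gmat N Yf (Suc j) *\<^sub>v ext = x j" using ge0 IH by simp
  have "gmat N Yf (Suc j) *\<^sub>v z' = gmat N Yf (Suc j) *\<^sub>v ext + al \<cdot>\<^sub>v (gmat N Yf (Suc j) *\<^sub>v G (Suc j))"
    unfolding z'_def using mult_add_distrib_mat_vec[OF gmat_carrier extc smult_carrier_vec[THEN iffD2, OF GJ(1)]]
      mult_mat_vec[OF gmat_carrier GJ(1)] by simp
  also have "\<dots> = x j + al \<cdot>\<^sub>v w (Suc j)" unfolding ge using wG[of "Suc j"] j by simp
  also have "\<dots> = x (Suc j)" using x(2)[rule_format, of "Suc j"] j unfolding al_def by simp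
  finally show ?case unfolding ZS by simp
qed

definition z0 where "z0 = minv TT *\<^sub>v (nb \<cdot>\<^sub>v unit_vec k 0)"

lemma z0_prop: "z0 \<in> carrier_vec k" "TT *\<^sub>v z0 = nb \<cdot>\<^sub>v unit_vec k 0"
  "\<And>z. z \<in> carrier_vec k \<Longrightarrow> TT *\<^sub>v z = nb \<cdot>\<^sub>v unit_vec k 0 \<Longrightarrow> z = z0"
proof -
  have ec: "nb \<cdot>\<^sub>v unit_vec k 0 \<in> carrier_vec k" by simp
  note M = minv_solve[OF Tmat_carrier Tj_det[OF order_refl] ec]
  show "z0 \<in> carrier_vec k" "TT *\<^sub>v z0 = nb \<cdot>\<^sub>v unit_vec k 0" unfolding z0_def using M(1,2) by auto
  fix z assume "z \<in> carrier_vec k" "TT *\<^sub>v z = nb \<cdot>\<^sub>v unit_vec k 0"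
  thus "z = z0" unfolding z0_def using M(3) by simp
qed

lemma xk: "x k = gmat N Yf k *\<^sub>v z0"
proof -
  have "Z k = z0" using Z_uniq[OF order_refl z0_prop(1)] A4[OF order_refl] unfolding z0_def by simp
  thus ?thesis using XZ[of k] by simp
qed

lemma xk_c2zero: assumes c2: "c2 = 0" shows "c1 \<noteq> 0" "x k = (1 / complex_of_real c1) \<cdot>\<^sub>v b"
proof -
  have k0: "0 < k" using k1 by simp
  have Uz: "(Umat u k *\<^sub>v z0) $ r * complex_of_real c1 = (nb \<cdot>\<^sub>v unit_vec k 0) $ r" if r: "r < k" for r
  proof -
    have "(nb \<cdot>\<^sub>v unit_vec k 0) $ r = (TT *\<^sub>v z0) $ r" using z0_prop(2) by simp
    also have "\<dots> = (\<Sum>c<k. TT $$ (r,c) * z0 $ c)" by (rule mv_idx[OF Tmat_carrier z0_prop(1) r])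
    also have "\<dots> = (\<Sum>c<k. complex_of_real c1 * (Umat u k $$ (r,c) * z0 $ c))"
      using r c2 by (intro sum.cong) (auto simp: Tmat_idx2)
    also have "\<dots> = complex_of_real c1 * (Umat u k *\<^sub>v z0) $ r"
      unfolding mv_idx[OF Umat_carrier z0_prop(1) r] by (simp add: sum_distrib_left)
    finally show ?thesis by simp
  qed
  show c1: "c1 \<noteq> 0"
  proof
    assume "c1 = 0"
    hence "(nb \<cdot>\<^sub>v unit_vec k 0) $ 0 = 0" using Uz[OF k0] by simp
    thus False using k0 vnb by simp
  qed
  have Uz0: "Umat u k *\<^sub>v z0 = (nb / complex_of_real c1) \<cdot>\<^sub>v unit_vec k 0"
  proof (rule eq_vecI)
    fix r assume "r < dim_vec ((nb / complex_of_real c1) \<cdot>\<^sub>v unit_vec k 0)"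
    hence r: "r < k" by simp
    show "(Umat u k *\<^sub>v z0) $ r = ((nb / complex_of_real c1) \<cdot>\<^sub>v unit_vec k 0) $ r"
      using Uz[OF r] c1 r by (simp add: field_simps)
  qed simp
  have QUc: "Qmat q N k \<in> carrier_mat N k" unfolding Qmat_def by (rule mat_carrier)
  have "x k = (Qmat q N k * Umat u k) *\<^sub>v z0" using xk QU[of k] by simp
  also have "\<dots> = Qmat q N k *\<^sub>v (Umat u k *\<^sub>v z0)"
    by (rule assoc_mult_mat_vec[OF QUc Umat_carrier z0_prop(1)])
  also have "\<dots> = (nb / complex_of_real c1) \<cdot>\<^sub>v (Qmat q N k *\<^sub>v unit_vec k 0)"
    unfolding Uz0 by (rule mult_mat_vec[OF QUc unit_vec_carrier])
  also have "Qmat q N k *\<^sub>v unit_vec k 0 = q 1"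
  proof -
    have "q 1 \<in> sp N (\<lambda>c. q (c+1)) k" using q_in_QS[of 1 k] k1 by simp
    have "gmat N (\<lambda>c. q (c+1)) k *\<^sub>v unit_vec k 0 = q 1"
    proof (rule eq_vecI)
      fix r assume "r < dim_vec (q 1)"
      hence r: "r < N" using carr(1)[of 1] by simp
      have "(\<Sum>c<k. q (c+1) $ r * unit_vec k 0 $ c) = (\<Sum>c<k. if c = 0 then q 1 $ r else 0)"
        by (intro sum.cong) (auto simp: unit_vec_def)
      also have "\<dots> = q 1 $ r" using k0 by simp
      finally show "(gmat N (\<lambda>c. q (c+1)) k *\<^sub>v unit_vec k 0) $ r = q 1 $ r" using r by (simp add: gmat_mv)
    qed (use carr(1)[of 1] in \<open>simp add: gmat_dim\<close>)
    thus ?thesis by (simp add: Qmat_gmat)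
  qed
  also have "(nb / complex_of_real c1) \<cdot>\<^sub>v q 1 = (1 / complex_of_real c1) \<cdot>\<^sub>v b"
  proof (rule eq_vecI)
    fix i assume "i < dim_vec ((1 / complex_of_real c1) \<cdot>\<^sub>v b)"
    hence i: "i < N" using b by simp
    have "b $ i = nb * q 1 $ i" using arg_cong[OF b_eq, of "\<lambda>v. v $ i"] carr(1)[of 1] i by simp
    thus "((nb / complex_of_real c1) \<cdot>\<^sub>v q 1) $ i = ((1 / complex_of_real c1) \<cdot>\<^sub>v b) $ i"
      using i b carr(1)[of 1] by simp
  qed (use b carr(1)[of 1] in simp)
  finally show "x k = (1 / complex_of_real c1) \<cdot>\<^sub>v b" .
qed

lemma b_KS: "b \<in> KS k"
proof -
  have "Kf 0 \<in> KS k" by (rule sp_gen) (use k1 Kf_car in auto)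
  thus ?thesis unfolding Kf_0 .
qed

lemma RZ: assumes z: "z \<in> carrier_vec k" and m: "1 \<le> m" "m \<le> k"
  shows "(b - D *\<^sub>v (gmat N Yf k *\<^sub>v z)) \<bullet>c q m = nb * (if m = 1 then 1 else 0) - (TT *\<^sub>v z) $ (m-1)"
proof -
  have qm: "q m \<in> carrier_vec N" using carr(1) m by simp
  have q1: "q 1 \<in> carrier_vec N" using carr(1) k1 by simp
  have Dx: "D *\<^sub>v (gmat N Yf k *\<^sub>v z) \<in> carrier_vec N" using Dcar by simp
  have "(b - D *\<^sub>v (gmat N Yf k *\<^sub>v z)) \<bullet>c q m = b \<bullet>c q m - (D *\<^sub>v (gmat N Yf k *\<^sub>v z)) \<bullet>c q m"
    by (rule ip_minusl[OF b(1) Dx qm])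
  also have "b \<bullet>c q m = nb * (q 1 \<bullet>c q m)" using b_eq ip_smultl[OF qm q1] by metis
  also have "q 1 \<bullet>c q m = (if m = 1 then 1 else 0)" using orthonormal[of 1 m] m by auto
  also have "(D *\<^sub>v (gmat N Yf k *\<^sub>v z)) \<bullet>c q m = (TT *\<^sub>v z) $ (m-1)" by (rule resid[OF z m])
  finally show ?thesis .
qed

lemma part6: "\<forall>y\<in>krylov D b k. (b - D *\<^sub>v x k) \<bullet>c y = 0"
proof
  fix y assume "y \<in> krylov D b k"
  hence y: "y \<in> QS k" using KS_QS krylov_sp by auto
  have xc: "x k \<in> carrier_vec N" unfolding xk by simp
  have rc: "b - D *\<^sub>v x k \<in> carrier_vec N" using b Dcar xc by simp
  show "(b - D *\<^sub>v x k) \<bullet>c y = 0"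
  proof (rule orth_QS[OF rc _ _ y])
    fix m assume m: "1 \<le> m" "m \<le> k"
    have "(b - D *\<^sub>v x k) \<bullet>c q m = nb * (if m = 1 then 1 else 0) - (TT *\<^sub>v z0) $ (m-1)"
      unfolding xk by (rule RZ[OF z0_prop(1) m])
    also have "\<dots> = 0" unfolding z0_prop(2) using m by auto
    finally show "(b - D *\<^sub>v x k) \<bullet>c q m = 0" .
  qed simp
qed

lemma part5: "x k \<in> krylov D b k"
proof (cases "c2 = 0")
  case True
  have "(1 / complex_of_real c1) \<cdot>\<^sub>v b \<in> KS k" using subspD(4)[OF KS_subsp b_KS] .
  thus ?thesis unfolding krylov_sp xk_c2zero(2)[OF True] .
next
  case False
  have "x k \<in> YS k" unfolding xk sp_def using z0_prop(1) by auto
  hence "x k \<in> QS k" using YS_QS[of k] by auto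
  thus ?thesis unfolding krylov_sp using QS_KS[OF False] by auto
qed

lemma part8: "\<exists>z\<in>carrier_vec k. TT *\<^sub>v z = nb \<cdot>\<^sub>v unit_vec k 0"
  using z0_prop(1,2) by auto

lemma part9: "\<forall>z\<in>carrier_vec k. TT *\<^sub>v z = nb \<cdot>\<^sub>v unit_vec k 0 \<longrightarrow> x k = (Qmat q N k * Umat u k) *\<^sub>v z"
  using z0_prop(3) xk QU[of k] by auto

lemma part10: "b - D *\<^sub>v x k = (b - D *\<^sub>v x (k-1)) - alpha k \<cdot>\<^sub>v (D *\<^sub>v w k)"
proof -
  have xs: "x k = x (k-1) + alpha k \<cdot>\<^sub>v w k" using x(2) k1 by auto
  have xc: "x (k-1) \<in> carrier_vec N" using XZ[of "k-1"] by simp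
  have wc: "w k \<in> carrier_vec N" using wG[of k] k1 by simp
  have "D *\<^sub>v x k = D *\<^sub>v x (k-1) + alpha k \<cdot>\<^sub>v (D *\<^sub>v w k)"
    unfolding xs using mult_add_distrib_mat_vec[OF Dcar xc smult_carrier_vec[THEN iffD2, OF wc]]
      mult_mat_vec[OF Dcar wc] by simp
  thus ?thesis using b(1) Dcar xc wc by (intro eq_vecI) auto
qed

lemma part7: "\<forall>x'\<in>krylov D b k. (\<forall>y\<in>krylov D b k. (b - D *\<^sub>v x') \<bullet>c y = 0) \<longrightarrow> x' = x k"
proof (intro ballI impI)
  fix x' assume x'K: "x' \<in> krylov D b k" and orth: "\<forall>y\<in>krylov D b k. (b - D *\<^sub>v x') \<bullet>c y = 0"
  show "x' = x k"
  proof (cases "c2 = 0")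
    case False
    have "x' \<in> YS k" using x'K krylov_sp KS_QS QS_YS[of k] by auto
    then obtain z where z: "z \<in> carrier_vec k" "x' = gmat N Yf k *\<^sub>v z" unfolding sp_def by auto
    have "TT *\<^sub>v z = nb \<cdot>\<^sub>v unit_vec k 0"
    proof (rule eq_vecI)
      fix r assume "r < dim_vec (nb \<cdot>\<^sub>v unit_vec k 0)"
      hence r: "r < k" by simp
      have m: "1 \<le> r + 1" "r + 1 \<le> k" using r by auto
      have "q (r+1) \<in> KS k" using q_KS[OF False m] KS_mono[of "r+1" k] m by auto
      hence "(b - D *\<^sub>v x') \<bullet>c q (r+1) = 0" using orth krylov_sp by auto
      hence "nb * (if r + 1 = 1 then 1 else 0) - (TT *\<^sub>v z) $ r = 0" using RZ[OF z(1) m] z(2) by simp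
      thus "(TT *\<^sub>v z) $ r = (nb \<cdot>\<^sub>v unit_vec k 0) $ r" using r by (auto simp: unit_vec_def)
    qed (simp add: Tmat_dim)
    hence "z = z0" using z0_prop(3)[OF z(1)] by simp
    thus ?thesis using z xk by simp
  next
    case True
    note c1 = xk_c2zero(1)[OF True]
    define Bs where "Bs = {y. \<exists>s. y = s \<cdot>\<^sub>v b}"
    have Bsub: "subsp N Bs"
    proof (rule subspI)
      show "Bs \<subseteq> carrier_vec N" unfolding Bs_def using b by auto
      show "0\<^sub>v N \<in> Bs" unfolding Bs_def using b by (intro CollectI exI[of _ 0]) (auto intro!: eq_vecI)
      fix y z c assume "y \<in> Bs" "z \<in> Bs"
      then obtain s t where "y = s \<cdot>\<^sub>v b" "z = t \<cdot>\<^sub>v b" unfolding Bs_def by auto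
      note st = this
      have "y + z = (s + t) \<cdot>\<^sub>v b" unfolding st using b by (intro eq_vecI) (auto simp: algebra_simps)
      thus "y + z \<in> Bs" unfolding Bs_def by auto
      have "c \<cdot>\<^sub>v y = (c * s) \<cdot>\<^sub>v b" unfolding st using b by (intro eq_vecI) auto
      thus "c \<cdot>\<^sub>v y \<in> Bs" unfolding Bs_def by auto
    qed
    have Kfb: "Kf c \<in> Bs" for c
    proof (induction c)
      case 0 thus ?case unfolding Bs_def Kf_0 using b by (intro CollectI exI[of _ 1]) (auto intro!: eq_vecI)
    next
      case (Suc c)
      then obtain s where s: "Kf c = s \<cdot>\<^sub>v b" unfolding Bs_def by auto
      have "Kf (Suc c) = complex_of_real c1 \<cdot>\<^sub>v Kf c + complex_of_real c2 \<cdot>\<^sub>v (V *\<^sub>v Kf c)"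
        unfolding Kf_Suc by (rule Dmv[OF Kf_car])
      also have "\<dots> = (complex_of_real c1 * s) \<cdot>\<^sub>v b" unfolding s using True b V by (intro eq_vecI) auto
      finally have "Kf (Suc c) = (complex_of_real c1 * s) \<cdot>\<^sub>v b" .
      thus ?case unfolding Bs_def by auto
    qed
    have "KS k \<subseteq> Bs" by (rule sp_sub[OF Bsub]) (use Kfb in auto)
    then obtain s where s: "x' = s \<cdot>\<^sub>v b" using x'K krylov_sp unfolding Bs_def by auto
    have sb: "s \<cdot>\<^sub>v b \<in> carrier_vec N" using b by simp
    have "D *\<^sub>v x' = complex_of_real c1 \<cdot>\<^sub>v (s \<cdot>\<^sub>v b) + complex_of_real c2 \<cdot>\<^sub>v (V *\<^sub>v (s \<cdot>\<^sub>v b))"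
      using Dmv[OF sb] s by simp
    also have "\<dots> = (complex_of_real c1 * s) \<cdot>\<^sub>v b" using True b V by (intro eq_vecI) auto
    finally have Dx': "D *\<^sub>v x' = (complex_of_real c1 * s) \<cdot>\<^sub>v b" .
    have "(b - D *\<^sub>v x') = (1 - complex_of_real c1 * s) \<cdot>\<^sub>v b" unfolding Dx' using b by (intro eq_vecI) (auto simp: algebra_simps)
    moreover have "(b - D *\<^sub>v x') \<bullet>c b = 0" using orth b_KS krylov_sp by auto
    ultimately have "(1 - complex_of_real c1 * s) * (b \<bullet>c b) = 0" using ip_smultl[OF b(1) b(1)] by simp
    moreover have "b \<bullet>c b \<noteq> 0" using ip_self[OF b(1)] vnb by simp
    ultimately have "complex_of_real c1 * s = 1" by simp
    hence "s = 1 / complex_of_real c1" using c1 by (simp add: field_simps)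
    thus ?thesis using s xk_c2zero(2)[OF True] by simp
  qed
qed

end

theorem mainTheorem5:
  fixes V D Lt Ut :: "complex mat" and N k :: nat and c1 c2 :: real and b :: "complex vec"
    and q v w x :: "nat \<Rightarrow> complex vec" and u l :: "nat \<Rightarrow> nat \<Rightarrow> complex"
    and alpha beta gamma :: "nat \<Rightarrow> complex"
  assumes V: "V \<in> carrier_mat N N" "V * mat_adjoint V = 1\<^sub>m N" "mat_adjoint V * V = 1\<^sub>m N"
    and D: "D = complex_of_real c1 \<cdot>\<^sub>m 1\<^sub>m N + complex_of_real c2 \<cdot>\<^sub>m V"
    and b: "b \<in> carrier_vec N" "b \<noteq> 0\<^sub>v N"
    and k: "1 \<le> k"
    and arnoldi: "unitary_arnoldi V b k q v u l"
    and beta: "\<And>j. beta j = - complex_of_real c2 * l (j+1) j"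
    and gamma: "\<And>j. gamma j = - complex_of_real c1 * u j (j+1)"
    and LU: "Lt \<in> carrier_mat k k" "Ut \<in> carrier_mat k k"
      "\<forall>i<k. \<forall>j<k. i < j \<longrightarrow> Lt $$ (i,j) = 0" "\<forall>i<k. Lt $$ (i,i) \<noteq> 0"
      "\<forall>i<k. \<forall>j<i. Ut $$ (i,j) = 0" "\<forall>i<k. Ut $$ (i,i) = 1"
      "Tmat c1 c2 u l k = Lt * Ut"
    and alpha: "alpha 1 = complex_of_real (vnorm b) / Lt $$ (0,0)"
      "\<forall>j\<in>{2..k}. alpha j = beta (j-1) * alpha (j-1) / Lt $$ (j-1,j-1)"
    and w: "w 1 = q 1"
      "\<forall>j\<in>{2..k}. w j = q j + u (j-1) j \<cdot>\<^sub>v q (j-1)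
                          + (gamma (j-1) / Lt $$ (j-2,j-2)) \<cdot>\<^sub>v w (j-1)"
    and x: "x 0 = 0\<^sub>v N" "\<forall>j\<in>{1..k}. x j = x (j-1) + alpha j \<cdot>\<^sub>v w j"
  shows "Lt $$ (0,0) = complex_of_real c1 + complex_of_real c2 * l 1 1
    \<and> (\<forall>j\<in>{2..k}. Lt $$ (j-1,j-1) = complex_of_real c1 + complex_of_real c2 * l j j
                                    - beta (j-1) * gamma (j-1) / Lt $$ (j-2,j-2))
    \<and> (\<forall>j\<in>{1..k}. w j = (Qmat q N j * Umat u j * minv (lead_sub Ut j)) *\<^sub>v unit_vec j (j-1))
    \<and> (\<forall>j\<in>{1..k}. alpha j = complex_of_real (vnorm b) * minv (Tmat c1 c2 u l j) $$ (j-1, 0))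
    \<and> x k \<in> krylov D b k
    \<and> (\<forall>y\<in>krylov D b k. (b - D *\<^sub>v x k) \<bullet>c y = 0)
    \<and> (\<forall>x'\<in>krylov D b k. (\<forall>y\<in>krylov D b k. (b - D *\<^sub>v x') \<bullet>c y = 0) \<longrightarrow> x' = x k)
    \<and> (\<exists>z\<in>carrier_vec k. Tmat c1 c2 u l k *\<^sub>v z = complex_of_real (vnorm b) \<cdot>\<^sub>v unit_vec k 0)
    \<and> (\<forall>z\<in>carrier_vec k. Tmat c1 c2 u l k *\<^sub>v z = complex_of_real (vnorm b) \<cdot>\<^sub>v unit_vec k 0
         \<longrightarrow> x k = (Qmat q N k * Umat u k) *\<^sub>v z)
    \<and> b - D *\<^sub>v x k = (b - D *\<^sub>v x (k-1)) - alpha k \<cdot>\<^sub>v (D *\<^sub>v w k)"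
proof -
  have tri: "\<And>i j. i < k \<Longrightarrow> j < k \<Longrightarrow> (j > i + 1 \<or> i > j + 1) \<Longrightarrow> Tmat c1 c2 u l k $$ (i,j) = 0"
    by (auto simp: Tmat_idx)
  interpret A: mainL V N k b q v u l D c1 c2 Lt Ut w x alpha beta gamma
    by unfold_locales (fact V(1) V(3) b(1) b(2) arnoldi D LU k beta gamma alpha w x tri)+
  show ?thesis
    apply (intro conjI)
    apply (fact A.part1)
    apply (fact A.part2)
    apply (fact A.part3)
    apply (fact A.part4)
    apply (fact A.part5)
    apply (fact A.part6)
    apply (fact A.part7)
    apply (fact A.part8)
    apply (fact A.part9)
    apply (fact A.part10)
    done
qed

end
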